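(* For every $n\ge 1$, the set $\{\varepsilon f_P:\varepsilon\in\{\pm1\},\ P\text{ a shrub on }\{1,\dots,n\}\}\subseteq\operatorname{Mould}(\{1,\dots,n\})$ is stable under the anticyclic action of $\mathfrak{S}_{n+1}$; consequently the signed shrubs $\operatorname{Arb}\times\mathbb{Z}/2$, embedded via $(\varepsilon,P)\mapsto\varepsilon f_P$ (resp. $(\varepsilon,P)\mapsto\varepsilon\gamma(P)$), form a set-theoretic anticyclic suboperad of $\operatorname{Mould}$ (resp. of $\operatorname{Zinb}$).
   Context: A shrub $P$ on a finite set $I$ is a set $E$ of edges (unordered pairs of distinct elements of $I$) with a height function $h_P:I\to\mathbb{N}$; $j$ covers $i$ if $\{i,j\}\in E$ and $h_P(j)=h_P(i)+1$. Axioms: (1) edges join vertices whose heights differ by $1$; (2) every vertex of positive height covers some vertex; (3) no four distinct $a,b,c,d$ with $a$ covering $b$ and $c$, $c$ covering $d$, $\{b,d\}\notin E$; (4) no five distinct $a,b,c,d,e$ with $a$ covering $c,d$, $b$ covering $d,e$, $\{a,e\}\notin E$, $\{b,c\}\notin E$. Shrubs form a set operad $\operatorname{Arb}$ with composition $P\circ_i P'$ = the shrub on $(I\setminus\{i\})\sqcup I'$ with height $h_P$ on $I\setminus\{i\}$, $h_{P'}+h_P(i)$ on $I'$, and edges those of $P$ not containing $i$, those of $P'$, and all $\{j,k\}$ with $j$ adjacent to $i$ in $P$ and $k$ of height $0$ in $P'$. $\operatorname{Arb}\times\mathbb{Z}/2$ has elements $(\varepsilon,P)$, $\varepsilon=\pm1$,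 with compositions multiplying signs. $\operatorname{Mould}(I)=\mathbb{Q}(u_i:i\in I)$ with $f\circ_i g=(\sum_{j\in J}u_j)\,g\,f|_{u_i=\sum_{j\in J}u_j}$; its anticyclic structure: $\mathfrak{S}_{n+1}$ acts on $\operatorname{Mould}(\{1,\dots,n\})$ by introducing $u_0=-(u_1+\dots+u_n)$, permuting $u_0,\dots,u_n$, and re-expressing in $u_1,\dots,u_n$. $\operatorname{Zinb}$ is the Zinbiel operad ($\operatorname{Zinb}(I)$ has basis the total orders on $I$), embedded in $\operatorname{Mould}$ by the injective operad morphism $\iota(\pi)=1/\prod_{i}\sum_{j\ge_\pi i}u_j$, whose image is stable under these actions, giving $\operatorname{Zinb}$ its anticyclic structure. $\gamma(P)\in\operatorname{Zinb}(I)$ is the sum of total orders $<$ on $I$ such that every vertex of positive height covers some smaller vertex, and $f_P=\iota(\gamma(P))$; explicitly, $f_P$ is the image of $P$ under the operad morphism $\operatorname{Arb}\to\operatorname{Mould}$ sending $[2\triangleleft 1]$ (edge $\{1,2\}$, $h(2)=0$, $h(1)=1$) to $1/(u_1(u_1+u_2))$ and $[1][2]$ (no edge) to $1/(u_1u_2)$. *)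

theory Defs
  imports Complex_Main "HOL-Combinatorics.Permutations"
begin

text \<open>A shrub on I = {1..n}: a set E of edges (2-element subsets of I)
  together with a height function h. Heights outside I are irrelevant.\<close>

definition covers :: "nat set set \<Rightarrow> (nat \<Rightarrow> nat) \<Rightarrow> nat \<Rightarrow> nat \<Rightarrow> bool" where
  "covers E h j i \<longleftrightarrow> {i, j} \<in> E \<and> h j = h i + 1"

definition shrub :: "nat \<Rightarrow> nat set set \<Rightarrow> (nat \<Rightarrow> nat) \<Rightarrow> bool" where
  "shrub n E h \<longleftrightarrow>
     (\<forall>e\<in>E. \<exists>i j. e = {i, j} \<and> i \<noteq> j \<and> i \<in> {1..n} \<and> j \<in> {1..n}) \<and>
     \<comment> \<open>(1) edges join vertices whose heights differ by 1\<close>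
     (\<forall>i j. {i, j} \<in> E \<longrightarrow> h i = h j + 1 \<or> h j = h i + 1) \<and>
     \<comment> \<open>(2) every vertex of positive height covers some vertex\<close>
     (\<forall>i\<in>{1..n}. 0 < h i \<longrightarrow> (\<exists>j\<in>{1..n}. covers E h i j)) \<and>
     \<comment> \<open>(3)\<close>
     \<not> (\<exists>a\<in>{1..n}. \<exists>b\<in>{1..n}. \<exists>c\<in>{1..n}. \<exists>d\<in>{1..n}.
          distinct [a, b, c, d] \<and> covers E h a b \<and> covers E h a c \<and>
          covers E h c d \<and> {b, d} \<notin> E) \<and>
     \<comment> \<open>(4)\<close>
     \<not> (\<exists>a\<in>{1..n}. \<exists>b\<in>{1..n}. \<exists>c\<in>{1..n}. \<exists>d\<in>{1..n}. \<exists>e\<in>{1..n}.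
          distinct [a, b, c, d, e] \<and> covers E h a c \<and> covers E h a d \<and>
          covers E h b d \<and> covers E h b e \<and> {a, e} \<notin> E \<and> {b, c} \<notin> E)"

text \<open>A total order on {1..n} is represented by the list of its elements in
  increasing order.\<close>

definition total_orders :: "nat \<Rightarrow> nat list set" where
  "total_orders n = {xs. distinct xs \<and> set xs = {1..n}}"

text \<open>Moulds are rational functions in u_1..u_n; they are represented by
  their evaluation functions on rational points u (only u 1..u n matter).\<close>

definition iota :: "nat list \<Rightarrow> (nat \<Rightarrow> rat) \<Rightarrow> rat" where
  "iota xs u = 1 / (\<Prod>k<length xs. (\<Sum>j\<in>set (drop k xs). u j))"

definition before :: "nat list \<Rightarrow> nat \<Rightarrow> nat \<Rightarrow> bool" where
  "before xs a b \<longleftrightarrow> (\<exists>k l. k < l \<and> l < length xs \<and> xs ! k = a \<and> xs ! l = b)"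

definition gamma_orders :: "nat \<Rightarrow> nat set set \<Rightarrow> (nat \<Rightarrow> nat) \<Rightarrow> nat list set" where
  "gamma_orders n E h = {xs \<in> total_orders n.
      \<forall>i\<in>{1..n}. 0 < h i \<longrightarrow> (\<exists>j\<in>{1..n}. covers E h i j \<and> before xs j i)}"

definition fP :: "nat \<Rightarrow> nat set set \<Rightarrow> (nat \<Rightarrow> nat) \<Rightarrow> (nat \<Rightarrow> rat) \<Rightarrow> rat" where
  "fP n E h u = (\<Sum>xs\<in>gamma_orders n E h. iota xs u)"

text \<open>Introduce u_0 = -(u_1+...+u_n), permute u_0..u_n by sigma
  (a permutation of {0..n}) and re-express in u_1..u_n.\<close>
definition ext_u :: "nat \<Rightarrow> (nat \<Rightarrow> rat) \<Rightarrow> nat \<Rightarrow> rat" where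
  "ext_u n u i = (if i = 0 then - (\<Sum>k\<in>{1..n}. u k) else u i)"

definition mould_act :: "nat \<Rightarrow> (nat \<Rightarrow> nat) \<Rightarrow> ((nat \<Rightarrow> rat) \<Rightarrow> rat) \<Rightarrow> (nat \<Rightarrow> rat) \<Rightarrow> rat" where
  "mould_act n \<sigma> f u = f (\<lambda>i. ext_u n u (\<sigma> i))"

text \<open>Generic points: all nonempty subset sums of u_1..u_n are nonzero
  (equivalently all sums over nonempty proper subsets of {0..n} of u_0..u_n).
  Two rational functions whose denominators are products of such linear forms
  are equal in Q(u_1..u_n) iff they agree at all generic rational points.\<close>
definition generic :: "nat \<Rightarrow> (nat \<Rightarrow> rat) \<Rightarrow> bool" where
  "generic n u \<longleftrightarrow> (\<forall>S. S \<subseteq> {1..n} \<and> S \<noteq> {} \<longrightarrow> (\<Sum>k\<in>S. u k) \<noteq> 0)"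

end

theory Submission
  imports Defs "HOL-Combinatorics.Multiset_Permutations"
begin

fun connr :: "(nat \<Rightarrow> nat \<Rightarrow> bool) \<Rightarrow> nat set \<Rightarrow> nat list \<Rightarrow> bool" where
  "connr adj A [] = True"
| "connr adj A (x # xs) = ((\<exists>a\<in>A. adj a x) \<and> connr adj (insert x A) xs)"

lemma connr_append: "connr adj A (xs @ ys) = (connr adj A xs \<and> connr adj (A \<union> set xs) ys)"
  by (induction xs arbitrary: A) (auto simp: insert_commute)

definition FF :: "(nat \<Rightarrow> nat \<Rightarrow> bool) \<Rightarrow> (nat \<Rightarrow> bool) \<Rightarrow> nat \<Rightarrow> nat set \<Rightarrow> nat set" where
  "FF adj col r R = {v. col v = col r \<and> (\<exists>x\<in>R. adj x v)}"

definition condT where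
  "condT adj col r r' R \<gamma> P \<longleftrightarrow> r' \<in> P \<and> P \<inter> FF adj col r R = {} \<and> last (filter (\<lambda>x. x\<in>P) \<gamma>) = r'
     \<and> connr adj {r'} (tl (rev (filter (\<lambda>x. x\<in>P) \<gamma>))) \<and> connr adj (P \<union> R) (filter (\<lambda>x. x\<notin>P) \<gamma>)"

definition rhsT where
  "rhsT adj col r r' R \<gamma> = (\<Sum>P\<in>Pow (set \<gamma>). if condT adj col r r' R \<gamma> P then (-1::int)^(card P + 1) else 0)"

lemma rhsT_split:
  assumes gn: "g \<notin> set \<gamma>'"
  shows "rhsT adj col r r' R (g#\<gamma>') =
    (\<Sum>P\<in>Pow (set \<gamma>'). (if condT adj col r r' R (g#\<gamma>') P then (-1::int)^(card P + 1) else 0)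
       + (if condT adj col r r' R (g#\<gamma>') (insert g P) then (-1::int)^(card (insert g P) + 1) else 0))"
proof -
  have "Pow (set (g#\<gamma>')) = Pow (set \<gamma>') \<union> insert g ` Pow (set \<gamma>')" by (simp add: Pow_insert)
  moreover have "Pow (set \<gamma>') \<inter> insert g ` Pow (set \<gamma>') = {}" using gn by auto
  moreover have "inj_on (insert g) (Pow (set \<gamma>'))" using gn
    by (auto simp: inj_on_def)
  ultimately show ?thesis unfolding rhsT_def
    by (simp add: sum.union_disjoint sum.reindex sum.distrib)
qed

lemma filt_facts:
  assumes gn: "g \<notin> set \<gamma>'" and P: "P \<subseteq> set \<gamma>'"
  shows "filter (\<lambda>x. x\<in>P) (g#\<gamma>') = filter (\<lambda>x. x\<in>P) \<gamma>'"
    "filter (\<lambda>x. x\<in>insert g P) (g#\<gamma>') = g # filter (\<lambda>x. x\<in>P) \<gamma>'"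
    "filter (\<lambda>x. x\<notin>P) (g#\<gamma>') = g # filter (\<lambda>x. x\<notin>P) \<gamma>'"
    "filter (\<lambda>x. x\<notin>insert g P) (g#\<gamma>') = filter (\<lambda>x. x\<notin>P) \<gamma>'"
    "set (filter (\<lambda>x. x\<in>P) \<gamma>') = P"
proof -
  have c1: "filter (\<lambda>x. x\<in>insert g P) \<gamma>' = filter (\<lambda>x. x\<in>P) \<gamma>'"
    by (rule filter_cong) (use gn in auto)
  have c2: "filter (\<lambda>x. x\<notin>insert g P) \<gamma>' = filter (\<lambda>x. x\<notin>P) \<gamma>'"
    by (rule filter_cong) (use gn in auto)
  show "filter (\<lambda>x. x\<in>P) (g#\<gamma>') = filter (\<lambda>x. x\<in>P) \<gamma>'" using gn P by auto
  show "filter (\<lambda>x. x\<in>insert g P) (g#\<gamma>') = g # filter (\<lambda>x. x\<in>P) \<gamma>'" using c1 by simp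
  show "filter (\<lambda>x. x\<notin>P) (g#\<gamma>') = g # filter (\<lambda>x. x\<notin>P) \<gamma>'" using gn P by auto
  show "filter (\<lambda>x. x\<notin>insert g P) (g#\<gamma>') = filter (\<lambda>x. x\<notin>P) \<gamma>'" using c2 by simp
  show "set (filter (\<lambda>x. x\<in>P) \<gamma>') = P" using P by auto
qed

lemma last_rev_set:
  assumes "f \<noteq> []" "last f = r'"
  shows "insert r' (set (tl (rev f))) = set f" "rev f = r' # tl (rev f)"
proof -
  have "rev f = hd (rev f) # tl (rev f)" using assms by simp
  moreover have "hd (rev f) = r'" using assms by (simp add: hd_rev)
  ultimately show "rev f = r' # tl (rev f)" by simp
  then show "insert r' (set (tl (rev f))) = set f" by (metis list.simps(15) set_rev)
qed

lemma T_main: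
  assumes sym: "\<And>x y. adj x y \<Longrightarrow> adj y x"
    and colr: "\<And>x y. adj x y \<Longrightarrow> col x \<noteq> col y" and rr: "adj r r'"
  shows "r \<in> R \<Longrightarrow> distinct \<gamma> \<Longrightarrow> set \<gamma> \<inter> R = {} \<Longrightarrow> r' \<in> set \<gamma> \<Longrightarrow>
     (if connr adj R \<gamma> then 1 else 0) = rhsT adj col r r' R \<gamma>"
proof (induction \<gamma> arbitrary: R)
  case Nil thus ?case by simp
next
  case (Cons g \<gamma>')
  have gn: "g \<notin> set \<gamma>'" using Cons.prems(2) by simp
  note sp = rhsT_split[OF gn, of adj col r r' R]
  have r'FF: "r' \<notin> FF adj col r R2" for R2 using colr[OF rr] by (auto simp: FF_def)
  consider (A) "g = r'" | (B) "g \<noteq> r'" "g \<in> FF adj col r R" | (C) "g \<noteq> r'" "g \<notin> FF adj col r R" by blast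
  then show ?case
  proof cases
    case A
    have r'n: "r' \<notin> set \<gamma>'" using gn A by simp
    have z: "(if condT adj col r r' R (g#\<gamma>') P then (-1::int)^(card P + 1) else 0)
       + (if condT adj col r r' R (g#\<gamma>') (insert g P) then (-1::int)^(card (insert g P) + 1) else 0)
      = (if P = {} then (if connr adj R (g#\<gamma>') then 1 else 0) else 0)" if P: "P \<in> Pow (set \<gamma>')" for P
    proof -
      have Ps: "P \<subseteq> set \<gamma>'" using P by simp
      note ff = filt_facts[OF gn Ps]
      have "\<not> condT adj col r r' R (g#\<gamma>') P" using Ps r'n by (auto simp: condT_def)
      moreover have "\<not> condT adj col r r' R (g#\<gamma>') (insert g P)" if "P \<noteq> {}"
      proof -
        have "filter (\<lambda>x. x\<in>P) \<gamma>' \<noteq> []" by (metis ff(5) that set_empty)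
        then have "last (filter (\<lambda>x. x\<in>insert g P) (g#\<gamma>')) \<in> P"
          using ff(2) ff(5) last_in_set by fastforce
        then show ?thesis using Ps r'n A by (auto simp: condT_def)
      qed
      moreover have "condT adj col r r' R (g#\<gamma>') (insert g {}) = connr adj R (g#\<gamma>')"
      proof -
        have "filter (\<lambda>x. x\<in>{r'}) (r'#\<gamma>') = [r']" using r'n by (auto simp: filter_empty_conv)
        moreover have "filter (\<lambda>x. x\<notin>{r'}) (r'#\<gamma>') = \<gamma>'" using r'n by (auto intro: filter_True)
        ultimately show ?thesis using A r'FF Cons.prems(1) rr by (auto simp: condT_def)
      qed
      ultimately show ?thesis by auto
    qed
    have "rhsT adj col r r' R (g#\<gamma>') = (\<Sum>P\<in>Pow (set \<gamma>'). (if P = {} then (if connr adj R (g#\<gamma>') then 1 else 0) else 0))"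
      unfolding sp by (rule sum.cong[OF refl]) (rule z)
    also have "\<dots> = (if connr adj R (g#\<gamma>') then 1 else 0)" by (simp add: sum.delta)
    finally show ?thesis by simp
  next
    case B
    let ?R = "insert g R"
    have aR: "\<exists>a\<in>R. adj a g" using B by (auto simp: FF_def)
    have FFeq: "FF adj col r ?R = FF adj col r R \<union> {v. col v = col r \<and> adj g v}" by (auto simp: FF_def)
    have colg: "col g = col r" using B by (auto simp: FF_def)
    have z: "(if condT adj col r r' R (g#\<gamma>') P then (-1::int)^(card P + 1) else 0)
       + (if condT adj col r r' R (g#\<gamma>') (insert g P) then (-1::int)^(card (insert g P) + 1) else 0)
      = (if condT adj col r r' ?R \<gamma>' P then (-1::int)^(card P + 1) else 0)" if P: "P \<in> Pow (set \<gamma>')" for P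
    proof -
      have Ps: "P \<subseteq> set \<gamma>'" using P by simp
      note ff = filt_facts[OF gn Ps]
      have "\<not> condT adj col r r' R (g#\<gamma>') (insert g P)" using B by (auto simp: condT_def)
      moreover have "P \<inter> FF adj col r ?R = P \<inter> FF adj col r R"
        using FFeq colg colr by auto
      moreover have "insert g (P \<union> R) = P \<union> ?R" by auto
      moreover have "condT adj col r r' R (g#\<gamma>') P \<longleftrightarrow> r' \<in> P \<and> P \<inter> FF adj col r R = {} \<and> last (filter (\<lambda>x. x\<in>P) \<gamma>') = r'
     \<and> connr adj {r'} (tl (rev (filter (\<lambda>x. x\<in>P) \<gamma>'))) \<and> (\<exists>a\<in>P \<union> R. adj a g) \<and> connr adj (insert g (P \<union> R)) (filter (\<lambda>x. x\<notin>P) \<gamma>')"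
        unfolding condT_def ff(1) ff(3) by simp
      ultimately show ?thesis using aR unfolding condT_def[of _ _ _ _ ?R] by (simp only:) auto
    qed
    have "rhsT adj col r r' R (g#\<gamma>') = rhsT adj col r r' ?R \<gamma>'"
      unfolding sp rhsT_def[of _ _ _ _ ?R] by (rule sum.cong[OF refl]) (rule z)
    moreover have "(if connr adj ?R \<gamma>' then 1 else 0) = rhsT adj col r r' ?R \<gamma>'"
      using Cons.prems B by (intro Cons.IH) auto
    ultimately show ?thesis using aR by simp
  next
    case C
    let ?R = "insert g R"
    have z: "(if condT adj col r r' R (g#\<gamma>') P then (-1::int)^(card P + 1) else 0)
       + (if condT adj col r r' R (g#\<gamma>') (insert g P) then (-1::int)^(card (insert g P) + 1) else 0)
      = (if (\<exists>a\<in>R. adj a g) then (if condT adj col r r' ?R \<gamma>' P then (-1::int)^(card P + 1) else 0) else 0)"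
      if P: "P \<in> Pow (set \<gamma>')" for P
    proof (cases "r' \<in> P")
      case False
      then show ?thesis using C by (auto simp: condT_def)
    next
      case True
      have Ps: "P \<subseteq> set \<gamma>'" using P by simp
      note ff = filt_facts[OF gn Ps]
      define f where "f = filter (\<lambda>x. x\<in>P) \<gamma>'"
      define q where "q = filter (\<lambda>x. x\<notin>P) \<gamma>'"
      have sf: "set f = P" using ff(5) f_def by simp
      have fne: "f \<noteq> []" using True sf by auto
      have finP: "finite P" using Ps finite_subset by blast
      have gP: "g \<notin> P" using Ps gn by blast
      have cardI: "card (insert g P) = card P + 1" using finP gP by simp
      have sgn: "(-1::int)^(card (insert g P) + 1) = - ((-1)^(card P + 1))" using cardI by simp
      have lastg: "last (g # f) = last f" using fne by simp
      have tlr: "tl (rev (g # f)) = tl (rev f) @ [g]" using fne by (cases "rev f") auto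
      have c1: "condT adj col r r' R (g#\<gamma>') P \<longleftrightarrow> P \<inter> FF adj col r R = {} \<and> last f = r'
           \<and> connr adj {r'} (tl (rev f)) \<and> (\<exists>a\<in>P \<union> R. adj a g) \<and> connr adj (insert g (P \<union> R)) q"
        using True ff(1,3) unfolding condT_def f_def q_def by simp
      have c2: "condT adj col r r' R (g#\<gamma>') (insert g P) \<longleftrightarrow> P \<inter> FF adj col r R = {} \<and> last f = r'
           \<and> connr adj {r'} (tl (rev f)) \<and> (\<exists>a\<in>P. adj a g) \<and> connr adj (insert g (P \<union> R)) q"
      proof -
        have "connr adj {r'} (tl (rev f) @ [g]) \<longleftrightarrow> connr adj {r'} (tl (rev f)) \<and> (\<exists>a\<in>insert r' (set (tl (rev f))). adj a g)"
          by (simp add: connr_append)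
        moreover have "last f = r' \<Longrightarrow> insert r' (set (tl (rev f))) = P" using last_rev_set[OF fne] sf by simp
        moreover have "condT adj col r r' R (g#\<gamma>') (insert g P) \<longleftrightarrow> r' \<in> insert g P \<and> insert g P \<inter> FF adj col r R = {} \<and> last (g#f) = r'
           \<and> connr adj {r'} (tl (rev (g#f))) \<and> connr adj (insert g P \<union> R) q"
          unfolding condT_def ff(2) ff(4) f_def q_def by (rule refl)
        ultimately show ?thesis using True C lastg tlr by auto
      qed
      have c3: "(\<exists>a\<in>R. adj a g) \<Longrightarrow> condT adj col r r' ?R \<gamma>' P \<longleftrightarrow> P \<inter> FF adj col r R = {} \<and> \<not>(\<exists>a\<in>P. adj a g) \<and> last f = r'
           \<and> connr adj {r'} (tl (rev f)) \<and> connr adj (insert g (P \<union> R)) q"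
      proof -
        assume aR: "\<exists>a\<in>R. adj a g"
        have colg: "col g \<noteq> col r" using C aR by (auto simp: FF_def)
        have "FF adj col r ?R = FF adj col r R \<union> {v. adj g v}"
          using colg colr by (auto simp: FF_def)
        then have "P \<inter> FF adj col r ?R = {} \<longleftrightarrow> P \<inter> FF adj col r R = {} \<and> \<not>(\<exists>a\<in>P. adj a g)"
          using sym by auto
        then show ?thesis using True unfolding condT_def f_def[symmetric] q_def[symmetric] by auto
      qed
      show ?thesis
      proof (cases "\<exists>a\<in>R. adj a g")
        case True
        then show ?thesis using c1 c2 c3[OF True] sgn by auto
      next
        case False
        then show ?thesis using c1 c2 sgn by auto
      qed
    qed
    have "rhsT adj col r r' R (g#\<gamma>') = (\<Sum>P\<in>Pow (set \<gamma>'). (if (\<exists>a\<in>R. adj a g) then (if condT adj col r r' ?R \<gamma>' P then (-1::int)^(card P + 1) else 0) else 0))"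
      unfolding sp by (rule sum.cong[OF refl]) (rule z)
    also have "\<dots> = (if (\<exists>a\<in>R. adj a g) then rhsT adj col r r' ?R \<gamma>' else 0)"
      by (simp add: rhsT_def)
    finally have "rhsT adj col r r' R (g#\<gamma>') = (if (\<exists>a\<in>R. adj a g) then rhsT adj col r r' ?R \<gamma>' else 0)" .
    moreover have "(if connr adj ?R \<gamma>' then 1 else 0) = rhsT adj col r r' ?R \<gamma>'"
      using Cons.prems C by (intro Cons.IH) auto
    ultimately show ?thesis by simp
  qed
qed

lemma iota_Nil[simp]: "iota [] u = 1" by (simp add: iota_def)

lemma iota_Cons: "iota (x#xs) u = iota xs u / (\<Sum>j\<in>set (x#xs). u j)"
proof -
  have "(\<Prod>k<length (x#xs). \<Sum>j\<in>set (drop k (x#xs)). u j) = (\<Sum>j\<in>set (x#xs). u j) * (\<Prod>k<length xs. \<Sum>j\<in>set (drop k xs). u j)"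
    using prod.lessThan_Suc_shift[of "\<lambda>k. \<Sum>j\<in>set (drop k (x#xs)). u j" "length xs"]
    by (simp del: set_simps)
  then show ?thesis by (simp add: iota_def)
qed

definition Mset :: "nat list \<Rightarrow> nat list \<Rightarrow> nat list set" where
  "Mset f q = {\<gamma> \<in> permutations_of_set (set f \<union> set q). filter (\<lambda>x. x \<in> set f) \<gamma> = f \<and> filter (\<lambda>x. x \<notin> set f) \<gamma> = q}"

lemma Mset_Nil1: "distinct q \<Longrightarrow> Mset [] q = {q}"
  by (auto simp: Mset_def permutations_of_set_def)

lemma Mset_Nil2: "distinct f \<Longrightarrow> Mset f [] = {f}"
proof -
  assume d: "distinct f"
  have "\<gamma> = f" if "set \<gamma> = set f" "filter (\<lambda>x. x \<in> set f) \<gamma> = f" for \<gamma>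
  proof -
    have "filter (\<lambda>x. x \<in> set f) \<gamma> = \<gamma>" using that(1) by (auto intro: filter_True)
    then show ?thesis using that(2) by simp
  qed
  then show ?thesis using d by (auto simp: Mset_def permutations_of_set_def filter_empty_conv)
qed

lemma Mset_Cons:
  assumes d: "distinct (a#f)" "distinct (b#q)" "set (a#f) \<inter> set (b#q) = {}"
  shows "Mset (a#f) (b#q) = (Cons a ` Mset f (b#q)) \<union> (Cons b ` Mset (a#f) q)"
proof (intro set_eqI iffI)
  fix \<gamma> assume g: "\<gamma> \<in> Mset (a#f) (b#q)"
  then have s: "set \<gamma> = set (a#f) \<union> set (b#q)" and dg: "distinct \<gamma>"
    and f1: "filter (\<lambda>x. x \<in> set (a#f)) \<gamma> = a#f" and f2: "filter (\<lambda>x. x \<notin> set (a#f)) \<gamma> = b#q"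
    by (auto simp: Mset_def permutations_of_set_def)
  obtain x \<gamma>' where gx: "\<gamma> = x#\<gamma>'" using s by (cases \<gamma>) auto
  have xn: "x \<notin> set \<gamma>'" using dg gx by simp
  show "\<gamma> \<in> (Cons a ` Mset f (b#q)) \<union> (Cons b ` Mset (a#f) q)"
  proof (cases "x \<in> set (a#f)")
    case True
    then have xa: "x = a" and ff: "filter (\<lambda>x. x \<in> set (a#f)) \<gamma>' = f" using f1 gx by auto
    have "filter (\<lambda>x. x \<in> set f) \<gamma>' = filter (\<lambda>x. x \<in> set (a#f)) \<gamma>'"
      by (rule filter_cong) (use xn xa in auto)
    moreover have "filter (\<lambda>x. x \<notin> set f) \<gamma>' = filter (\<lambda>x. x \<notin> set (a#f)) \<gamma>'"
      by (rule filter_cong) (use xn xa in auto)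
    moreover have "filter (\<lambda>x. x \<notin> set (a#f)) \<gamma>' = b#q" using f2 gx True by auto
    moreover have "set \<gamma>' = set f \<union> set (b#q)" using s gx xn xa d by auto
    ultimately have "\<gamma>' \<in> Mset f (b#q)" using ff dg gx by (auto simp: Mset_def permutations_of_set_def)
    then show ?thesis using gx xa by auto
  next
    case False
    then have xb: "x = b" and ff: "filter (\<lambda>x. x \<notin> set (a#f)) \<gamma>' = q" using f2 gx by auto
    have "filter (\<lambda>x. x \<in> set (a#f)) \<gamma>' = a#f" using f1 gx False by simp
    moreover have "set \<gamma>' = set (a#f) \<union> set q" using s gx xn xb d by auto
    ultimately have "\<gamma>' \<in> Mset (a#f) q" using ff dg gx by (auto simp: Mset_def permutations_of_set_def)
    then show ?thesis using gx xb by auto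
  qed
next
  fix \<gamma> assume "\<gamma> \<in> (Cons a ` Mset f (b#q)) \<union> (Cons b ` Mset (a#f) q)"
  then show "\<gamma> \<in> Mset (a#f) (b#q)"
  proof
    assume "\<gamma> \<in> Cons a ` Mset f (b#q)"
    then obtain \<gamma>' where g: "\<gamma> = a#\<gamma>'" "\<gamma>' \<in> Mset f (b#q)" by auto
    then have s: "set \<gamma>' = set f \<union> set (b#q)" and dg: "distinct \<gamma>'"
      and f1: "filter (\<lambda>x. x \<in> set f) \<gamma>' = f" and f2: "filter (\<lambda>x. x \<notin> set f) \<gamma>' = b#q"
      by (auto simp: Mset_def permutations_of_set_def)
    have an: "a \<notin> set \<gamma>'" using s d by auto
    have "filter (\<lambda>x. x \<in> set (a#f)) \<gamma>' = filter (\<lambda>x. x \<in> set f) \<gamma>'"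
      by (rule filter_cong) (use an in auto)
    moreover have "filter (\<lambda>x. x \<notin> set (a#f)) \<gamma>' = filter (\<lambda>x. x \<notin> set f) \<gamma>'"
      by (rule filter_cong) (use an in auto)
    ultimately show ?thesis using g s dg f1 f2 an by (auto simp: Mset_def permutations_of_set_def)
  next
    assume "\<gamma> \<in> Cons b ` Mset (a#f) q"
    then obtain \<gamma>' where g: "\<gamma> = b#\<gamma>'" "\<gamma>' \<in> Mset (a#f) q" by auto
    then have s: "set \<gamma>' = set (a#f) \<union> set q" and dg: "distinct \<gamma>'"
      and f1: "filter (\<lambda>x. x \<in> set (a#f)) \<gamma>' = a#f" and f2: "filter (\<lambda>x. x \<notin> set (a#f)) \<gamma>' = q"
      by (auto simp: Mset_def permutations_of_set_def)
    have bn: "b \<notin> set \<gamma>'" using s d by auto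
    have bA: "b \<notin> set (a#f)" using d by auto
    show ?thesis using g s dg f1 f2 bn bA by (auto simp: Mset_def permutations_of_set_def)
  qed
qed

lemma finite_Mset: "finite (Mset f q)"
  unfolding Mset_def by simp

lemma aux_field: "(a::rat) \<noteq> 0 \<Longrightarrow> b \<noteq> 0 \<Longrightarrow> a + b \<noteq> 0 \<Longrightarrow> (X * (Y / b) + X / a * Y) / (a + b) = X / a * (Y / b)"
proof -
  assume h: "a \<noteq> 0" "b \<noteq> 0" "a + b \<noteq> 0"
  have "X * (Y / b) + X / a * Y = X * Y * (a + b) / (a * b)" using h by (simp add: field_simps)
  then show ?thesis using h by simp
qed

lemma shuffle_iota:
  fixes U :: "nat \<Rightarrow> rat"
  assumes "distinct f" "distinct q" "set f \<inter> set q = {}"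
    and gen: "\<And>S. S \<subseteq> set f \<union> set q \<Longrightarrow> S \<noteq> {} \<Longrightarrow> sum U S \<noteq> 0"
  shows "(\<Sum>\<gamma>\<in>Mset f q. iota \<gamma> U) = iota f U * iota q U"
  using assms
proof (induction "length f + length q" arbitrary: f q)
  case 0
  then show ?case by (simp add: Mset_Nil1)
next
  case (Suc m)
  show ?case
  proof (cases f)
    case Nil
    then show ?thesis using Suc.prems by (simp add: Mset_Nil1)
  next
    case (Cons a f')
    show ?thesis
    proof (cases q)
      case Nil
      then show ?thesis using Suc.prems by (simp add: Mset_Nil2)
    next
      case (Cons b q')
      note fa = \<open>f = a # f'\<close>
      have d: "distinct (a#f')" "distinct (b#q')" "set (a#f') \<inter> set (b#q') = {}"
        using Suc.prems fa Cons by auto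
      have disj: "Cons a ` Mset f' (b#q') \<inter> Cons b ` Mset (a#f') q' = {}" using d by auto
      have IH1: "(\<Sum>\<gamma>\<in>Mset f' (b#q'). iota \<gamma> U) = iota f' U * iota (b#q') U"
        using Suc.hyps(1)[of f' "b#q'"] Suc.prems fa Cons Suc.hyps(2) by auto
      have IH2: "(\<Sum>\<gamma>\<in>Mset (a#f') q'. iota \<gamma> U) = iota (a#f') U * iota q' U"
        using Suc.hyps(1)[of "a#f'" q'] Suc.prems fa Cons Suc.hyps(2) by auto
      define sA where "sA = (\<Sum>j\<in>set (a#f'). U j)"
      define sB where "sB = (\<Sum>j\<in>set (b#q'). U j)"
      have sAB: "(\<Sum>j\<in>set (a#f') \<union> set (b#q'). U j) = sA + sB"
        unfolding sA_def sB_def by (rule sum.union_disjoint) (use d in auto)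
      have nA: "sA \<noteq> 0" unfolding sA_def using Suc.prems(4) fa by (intro Suc.prems(4)) (auto simp: fa)
      have nB: "sB \<noteq> 0" unfolding sB_def using Suc.prems(4) Cons by (intro Suc.prems(4)) (auto simp: Cons)
      have nAB: "sA + sB \<noteq> 0" using Suc.prems(4)[of "set (a#f') \<union> set (b#q')"] sAB fa Cons by auto
      have setg: "set (a # \<gamma>) = set (a#f') \<union> set (b#q')" if "\<gamma> \<in> Mset f' (b#q')" for \<gamma>
        using that by (auto simp: Mset_def permutations_of_set_def)
      have setg2: "set (b # \<gamma>) = set (a#f') \<union> set (b#q')" if "\<gamma> \<in> Mset (a#f') q'" for \<gamma>
        using that by (auto simp: Mset_def permutations_of_set_def)
      have "(\<Sum>\<gamma>\<in>Mset f q. iota \<gamma> U) = (\<Sum>\<gamma>\<in>Cons a ` Mset f' (b#q'). iota \<gamma> U) + (\<Sum>\<gamma>\<in>Cons b ` Mset (a#f') q'. iota \<gamma> U)"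
        unfolding fa Cons Mset_Cons[OF d] by (rule sum.union_disjoint) (use disj finite_Mset in auto)
      also have "\<dots> = (\<Sum>\<gamma>\<in>Mset f' (b#q'). iota (a#\<gamma>) U) + (\<Sum>\<gamma>\<in>Mset (a#f') q'. iota (b#\<gamma>) U)"
        by (simp add: sum.reindex)
      also have "\<dots> = (\<Sum>\<gamma>\<in>Mset f' (b#q'). iota \<gamma> U / (sA+sB)) + (\<Sum>\<gamma>\<in>Mset (a#f') q'. iota \<gamma> U / (sA + sB))"
        using setg setg2 sAB by (simp add: iota_Cons del: set_simps)
      also have "\<dots> = (iota f' U * iota (b#q') U + iota (a#f') U * iota q' U) / (sA + sB)"
        by (simp add: sum_divide_distrib[symmetric] IH1 IH2 add_divide_distrib)
      also have "\<dots> = iota (a#f') U * iota (b#q') U"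
      proof -
        have e1: "iota (a#f') U = iota f' U / sA" unfolding sA_def by (rule iota_Cons)
        have e2: "iota (b#q') U = iota q' U / sB" unfolding sB_def by (rule iota_Cons)
        show ?thesis using nA nB nAB unfolding e1 e2 by (rule aux_field)
      qed
      finally show ?thesis using fa Cons by simp
    qed
  qed
qed

lemma iota_append:
  "distinct (xs @ ys) \<Longrightarrow> iota (xs @ ys) u = iota ys u / (\<Prod>k<length xs. (\<Sum>j\<in>set (drop k xs). u j) + (\<Sum>j\<in>set ys. u j))"
proof (induction xs)
  case Nil then show ?case by simp
next
  case (Cons x xs)
  have dis: "set (x#xs) \<inter> set ys = {}" using Cons.prems by auto
  have s: "(\<Sum>j\<in>set (x # xs @ ys). u j) = (\<Sum>j\<in>set (x#xs). u j) + (\<Sum>j\<in>set ys. u j)"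
    using sum.union_disjoint[of "set (x#xs)" "set ys" u] dis by (simp del: set_simps add: set_append[symmetric])
  have p: "(\<Prod>k<length (x#xs). (\<Sum>j\<in>set (drop k (x#xs)). u j) + (\<Sum>j\<in>set ys. u j))
     = ((\<Sum>j\<in>set (x#xs). u j) + (\<Sum>j\<in>set ys. u j)) * (\<Prod>k<length xs. (\<Sum>j\<in>set (drop k xs). u j) + (\<Sum>j\<in>set ys. u j))"
    using prod.lessThan_Suc_shift[of "\<lambda>k. (\<Sum>j\<in>set (drop k (x#xs)). u j) + (\<Sum>j\<in>set ys. u j)" "length xs"]
    by (simp del: set_simps)
  have "iota ((x#xs) @ ys) u = iota (xs @ ys) u / (\<Sum>j\<in>set (x # xs @ ys). u j)"
    using iota_Cons[of x "xs @ ys" u] by simp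
  also have "\<dots> = iota ys u / (\<Prod>k<length xs. (\<Sum>j\<in>set (drop k xs). u j) + (\<Sum>j\<in>set ys. u j)) / ((\<Sum>j\<in>set (x#xs). u j) + (\<Sum>j\<in>set ys. u j))"
    using Cons s by simp
  also have "\<dots> = iota ys u / (\<Prod>k<length (x#xs). (\<Sum>j\<in>set (drop k (x#xs)). u j) + (\<Sum>j\<in>set ys. u j))"
    unfolding p by (simp add: mult.commute)
  finally show ?case .
qed

lemma iota_rev: "iota (rev \<alpha>) u = 1 / (\<Prod>k<length \<alpha>. \<Sum>j\<in>set (take (Suc k) \<alpha>). u j)"
proof -
  let ?g = "\<lambda>i. \<Sum>j\<in>set (take (Suc i) \<alpha>). u j"
  have "(\<Prod>k<length \<alpha>. \<Sum>j\<in>set (drop k (rev \<alpha>)). u j) = (\<Prod>k<length \<alpha>. ?g (length \<alpha> - Suc k))"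
  proof (rule prod.cong[OF refl])
    fix k assume "k \<in> {..<length \<alpha>}"
    then have "Suc (length \<alpha> - Suc k) = length \<alpha> - k" by auto
    then show "(\<Sum>j\<in>set (drop k (rev \<alpha>)). u j) = ?g (length \<alpha> - Suc k)" by (simp add: drop_rev)
  qed
  also have "\<dots> = (\<Prod>k<length \<alpha>. ?g k)" by (rule prod.nat_diff_reindex)
  finally show ?thesis by (simp add: iota_def)
qed

lemma neg_pow_div: "(a::rat) / ((-1)^n * p) = (-1)^n * (1 / p * a)"
  by (cases "even n") (simp_all add: field_simps)

lemma phi_split:
  fixes U :: "nat \<Rightarrow> rat"
  assumes d: "distinct (r' # \<alpha>' @ r # \<beta>)" and z: "(\<Sum>j\<in>set (r' # \<alpha>' @ r # \<beta>). U j) = 0"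
  shows "iota (\<alpha>' @ r # \<beta>) U = (-1)^(Suc (length \<alpha>')) * (iota (rev (r' # \<alpha>')) U * iota \<beta> U)"
proof -
  let ?x = "\<lambda>k. \<Sum>j\<in>set (take (Suc k) (r' # \<alpha>')). U j"
  have e: "(\<Sum>j\<in>set (drop k (\<alpha>' @ [r])). U j) + (\<Sum>j\<in>set \<beta>. U j) = - ?x k" if k: "k < Suc (length \<alpha>')" for k
  proof -
    have dk: "drop k (\<alpha>' @ [r]) = drop k \<alpha>' @ [r]" using k by simp
    have tk: "take (Suc k) (r' # \<alpha>') = r' # take k \<alpha>'" by simp
    have leq: "take (Suc k) (r' # \<alpha>') @ drop k (\<alpha>' @ [r]) @ \<beta> = r' # \<alpha>' @ r # \<beta>"
    proof -
      have "take (Suc k) (r' # \<alpha>') @ drop k (\<alpha>' @ [r]) @ \<beta> = r' # (take k \<alpha>' @ drop k \<alpha>') @ r # \<beta>"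
        using dk tk by simp
      then show ?thesis by (simp only: append_take_drop_id)
    qed
    have V: "set (r' # \<alpha>' @ r # \<beta>) = set (take (Suc k) (r' # \<alpha>')) \<union> (set (drop k (\<alpha>' @ [r])) \<union> set \<beta>)"
      by (simp only: leq[symmetric] set_append)
    have dd: "distinct (take (Suc k) (r' # \<alpha>') @ drop k (\<alpha>' @ [r]) @ \<beta>)"
      using d by (simp only: leq)
    have "0 = (\<Sum>j\<in>set (take (Suc k) (r' # \<alpha>')) \<union> (set (drop k (\<alpha>' @ [r])) \<union> set \<beta>). U j)"
      using z V by simp
    also have "\<dots> = ?x k + ((\<Sum>j\<in>set (drop k (\<alpha>' @ [r])). U j) + (\<Sum>j\<in>set \<beta>. U j))"
    proof -
      have dj: "set (take (Suc k) (r'#\<alpha>')) \<inter> (set (drop k (\<alpha>'@[r])) \<union> set \<beta>) = {}"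
           "set (drop k (\<alpha>'@[r])) \<inter> set \<beta> = {}"
        using dd unfolding distinct_append set_append by blast+
      show ?thesis
        by (subst sum.union_disjoint[OF _ _ dj(1)], simp, simp, subst sum.union_disjoint[OF _ _ dj(2)], simp_all)
    qed
    finally show ?thesis by (simp add: algebra_simps)
  qed
  have "iota (\<alpha>' @ r # \<beta>) U = iota ((\<alpha>' @ [r]) @ \<beta>) U" by simp
  also have "\<dots> = iota \<beta> U / (\<Prod>k<length (\<alpha>' @ [r]). (\<Sum>j\<in>set (drop k (\<alpha>' @ [r])). U j) + (\<Sum>j\<in>set \<beta>. U j))"
    using d by (intro iota_append) simp
  also have "\<dots> = iota \<beta> U / (\<Prod>k<Suc (length \<alpha>'). - ?x k)"
    by (rule arg_cong[where f="\<lambda>p. iota \<beta> U / p"], rule prod.cong) (simp, rule e, simp)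
  also have "\<dots> = iota \<beta> U / ((-1)^(Suc (length \<alpha>')) * (\<Prod>k<Suc (length \<alpha>'). ?x k))"
    by (simp only: prod_uminus card_lessThan)
  also have "\<dots> = (-1)^(Suc (length \<alpha>')) * (iota (rev (r' # \<alpha>')) U * iota \<beta> U)"
    unfolding iota_rev length_Cons by (rule neg_pow_div)
  finally show ?thesis .
qed

definition Croot :: "(nat \<Rightarrow> nat \<Rightarrow> bool) \<Rightarrow> nat set \<Rightarrow> nat \<Rightarrow> (nat \<Rightarrow> rat) \<Rightarrow> rat" where
  "Croot adj V k U = (\<Sum>\<gamma>\<in>permutations_of_set (V - {k}). if connr adj {k} \<gamma> then iota \<gamma> U else 0)"

definition Cnd :: "(nat \<Rightarrow> nat \<Rightarrow> bool) \<Rightarrow> nat \<Rightarrow> nat \<Rightarrow> nat set \<Rightarrow> nat list \<Rightarrow> nat list \<Rightarrow> bool" where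
  "Cnd adj r r' P f q \<longleftrightarrow> r' \<in> P \<and> last f = r' \<and> connr adj {r'} (tl (rev f)) \<and> connr adj (P \<union> {r}) q"

lemma L1:
  fixes U :: "nat \<Rightarrow> rat" and col :: "nat \<Rightarrow> bool"
  assumes sym: "\<And>x y. adj x y \<Longrightarrow> adj y x"
    and colr: "\<And>x y. adj x y \<Longrightarrow> col x \<noteq> col y" and rr: "adj r r'"
    and g: "\<gamma> \<in> permutations_of_set W" and W: "r \<notin> W" "r' \<in> W"
  shows "(if connr adj {r} \<gamma> then iota \<gamma> U else 0) =
    - (\<Sum>P\<in>Pow W. if Cnd adj r r' P (filter (\<lambda>x. x\<in>P) \<gamma>) (filter (\<lambda>x. x\<notin>P) \<gamma>) then (-1)^card P * iota \<gamma> U else 0)"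
proof -
  have sg: "set \<gamma> = W" "distinct \<gamma>" using g by (auto simp: permutations_of_set_def)
  have FF0: "FF adj col r {r} = {}" using colr by (auto simp: FF_def)
  have ce: "condT adj col r r' {r} \<gamma> P = Cnd adj r r' P (filter (\<lambda>x. x\<in>P) \<gamma>) (filter (\<lambda>x. x\<notin>P) \<gamma>)" for P
    unfolding condT_def Cnd_def FF0 by auto
  have T: "(if connr adj {r} \<gamma> then 1 else 0) = rhsT adj col r r' {r} \<gamma>"
    apply (rule T_main[where adj=adj and col=col])
    apply (erule sym) apply (erule colr) apply (rule rr) using sg W by auto
  have "(if connr adj {r} \<gamma> then iota \<gamma> U else 0) = of_int (if connr adj {r} \<gamma> then 1 else 0) * iota \<gamma> U" by simp
  also have "\<dots> = of_int (rhsT adj col r r' {r} \<gamma>) * iota \<gamma> U" using T by simp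
  also have "\<dots> = (\<Sum>P\<in>Pow W. of_int (if condT adj col r r' {r} \<gamma> P then (-1::int)^(card P + 1) else 0) * iota \<gamma> U)"
    unfolding rhsT_def sg(1) of_int_sum sum_distrib_right by simp
  also have "\<dots> = - (\<Sum>P\<in>Pow W. if Cnd adj r r' P (filter (\<lambda>x. x\<in>P) \<gamma>) (filter (\<lambda>x. x\<notin>P) \<gamma>) then (-1)^card P * iota \<gamma> U else 0)"
    unfolding ce sum_negf[symmetric] by (rule sum.cong) auto
  finally show ?thesis .
qed

lemma L2:
  fixes U :: "nat \<Rightarrow> rat" and c :: rat
  assumes fin: "finite W" and P: "P \<subseteq> W"
    and gen: "\<And>S. S \<subseteq> W \<Longrightarrow> S \<noteq> {} \<Longrightarrow> sum U S \<noteq> 0"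
  shows "(\<Sum>\<gamma>\<in>permutations_of_set W. if Cnd adj r r' P (filter (\<lambda>x. x\<in>P) \<gamma>) (filter (\<lambda>x. x\<notin>P) \<gamma>) then c * iota \<gamma> U else 0)
    = (\<Sum>fq\<in>permutations_of_set P \<times> permutations_of_set (W - P). if Cnd adj r r' P (fst fq) (snd fq) then c * (iota (fst fq) U * iota (snd fq) U) else 0)"
proof -
  let ?h = "\<lambda>\<gamma>. if Cnd adj r r' P (filter (\<lambda>x. x\<in>P) \<gamma>) (filter (\<lambda>x. x\<notin>P) \<gamma>) then c * iota \<gamma> U else 0"
  let ?g = "\<lambda>\<gamma>. (filter (\<lambda>x. x\<in>P) \<gamma>, filter (\<lambda>x. x\<notin>P) \<gamma>)"
  let ?T = "permutations_of_set P \<times> permutations_of_set (W - P)"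
  have img: "?g ` permutations_of_set W \<subseteq> ?T"
    using P by (auto simp: permutations_of_set_def)
  have "(\<Sum>\<gamma>\<in>permutations_of_set W. ?h \<gamma>) = (\<Sum>fq\<in>?T. \<Sum>\<gamma>\<in>{\<gamma>. \<gamma> \<in> permutations_of_set W \<and> ?g \<gamma> = fq}. ?h \<gamma>)"
    by (rule sum.group[symmetric]) (use img in auto)
  also have "\<dots> = (\<Sum>fq\<in>?T. if Cnd adj r r' P (fst fq) (snd fq) then c * (iota (fst fq) U * iota (snd fq) U) else 0)"
  proof (rule sum.cong[OF refl])
    fix fq assume fq: "fq \<in> ?T"
    obtain f q where fqd: "fq = (f, q)" by (cases fq)
    have f: "set f = P" "distinct f" and q: "set q = W - P" "distinct q" using fq fqd by (auto simp: permutations_of_set_def)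
    have Meq: "{\<gamma>. \<gamma> \<in> permutations_of_set W \<and> ?g \<gamma> = fq} = Mset f q"
    proof -
      have sfq: "set f \<union> set q = W" using f q P by auto
      show ?thesis unfolding Mset_def fqd unfolding sfq unfolding f(1) by auto
    qed
    have "(\<Sum>\<gamma>\<in>Mset f q. ?h \<gamma>) = (\<Sum>\<gamma>\<in>Mset f q. if Cnd adj r r' P f q then c * iota \<gamma> U else 0)"
      by (rule sum.cong[OF refl]) (auto simp: Mset_def f)
    also have "\<dots> = (if Cnd adj r r' P f q then c * (\<Sum>\<gamma>\<in>Mset f q. iota \<gamma> U) else 0)"
      by (simp add: sum_distrib_left)
    also have "\<dots> = (if Cnd adj r r' P f q then c * (iota f U * iota q U) else 0)"
    proof -
      have "(\<Sum>\<gamma>\<in>Mset f q. iota \<gamma> U) = iota f U * iota q U"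
        apply (rule shuffle_iota) using f q P apply auto[3] apply (rule gen) using f q P by auto
      then show ?thesis by simp
    qed
    finally show "(\<Sum>\<gamma>\<in>{\<gamma>. \<gamma> \<in> permutations_of_set W \<and> ?g \<gamma> = fq}. ?h \<gamma>) = (if Cnd adj r r' P (fst fq) (snd fq) then c * (iota (fst fq) U * iota (snd fq) U) else 0)"
      by (subst Meq) (simp add: fqd)
  qed
  finally show ?thesis .
qed

lemma split_at:
  assumes "r \<in> set b"
  shows "b = takeWhile (\<lambda>x. x \<noteq> r) b @ r # tl (dropWhile (\<lambda>x. x \<noteq> r) b)"
proof -
  have ne: "dropWhile (\<lambda>x. x \<noteq> r) b \<noteq> []" using assms by auto
  then have "hd (dropWhile (\<lambda>x. x \<noteq> r) b) = r" using hd_dropWhile[OF ne] by simp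
  then have "dropWhile (\<lambda>x. x \<noteq> r) b = r # tl (dropWhile (\<lambda>x. x \<noteq> r) b)" using ne by (metis list.collapse)
  then show ?thesis by (metis takeWhile_dropWhile_id)
qed

lemma L3:
  fixes U :: "nat \<Rightarrow> rat"
  assumes fin: "finite V" and rV: "r \<in> V" and r'V: "r' \<in> V" and rne: "r \<noteq> r'"
    and sym: "\<And>x y. adj x y \<Longrightarrow> adj y x" and rr: "adj r r'" and z: "sum U V = 0"
  shows "Croot adj V r' U = (\<Sum>(P,fq)\<in>Sigma (Pow (V-{r})) (\<lambda>P. permutations_of_set P \<times> permutations_of_set (V - {r} - P)).
      if Cnd adj r r' P (fst fq) (snd fq) then (-1)^card P * (iota (fst fq) U * iota (snd fq) U) else 0)"
proof -
  let ?S = "Sigma (Pow (V-{r})) (\<lambda>P. permutations_of_set P \<times> permutations_of_set (V - {r} - P))"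
  let ?G = "\<lambda>(P,fq). if Cnd adj r r' P (fst fq) (snd fq) then (-1)^card P * (iota (fst fq) U * iota (snd fq) U) else (0::rat)"
  let ?S' = "{a \<in> ?S. r' \<in> fst a \<and> last (fst (snd a)) = r'}"
  let ?T = "permutations_of_set (V - {r'})"
  let ?h = "\<lambda>\<delta>. if connr adj {r'} \<delta> then iota \<delta> U else 0"
  let ?j = "\<lambda>(P::nat set,(f::nat list,q::nat list)). tl (rev f) @ r # q"
  let ?i = "\<lambda>\<delta>. (insert r' (set (takeWhile (\<lambda>x. x \<noteq> r) \<delta>)), (rev (r' # takeWhile (\<lambda>x. x \<noteq> r) \<delta>), tl (dropWhile (\<lambda>x. x \<noteq> r) \<delta>)))"
  have finS: "finite ?S" using fin by (auto intro!: finite_SigmaI)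
  have "sum ?G ?S = sum ?G ?S'"
  proof (rule sum.mono_neutral_right[OF finS])
    show "?S' \<subseteq> ?S" by blast
    show "\<forall>a\<in>?S - ?S'. ?G a = 0"
    proof
      fix a assume "a \<in> ?S - ?S'"
      then have "\<not>(r' \<in> fst a \<and> last (fst (snd a)) = r')" by blast
      then show "?G a = 0" by (cases a) (auto simp: Cnd_def)
    qed
  qed
  also have "sum ?G ?S' = sum ?h ?T"
  proof (rule sum.reindex_bij_witness[where i = ?i and j = ?j])
    fix a assume a: "a \<in> ?S'"
    obtain P f q where ad: "a = (P, (f, q))" by (cases a) auto
    have P: "P \<subseteq> V - {r}" "r' \<in> P" and f: "set f = P" "distinct f" "last f = r'"
      and q: "set q = V - {r} - P" "distinct q" using a ad by (auto simp: permutations_of_set_def)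
    define a' where "a' = tl (rev f)"
    have fne: "f \<noteq> []" using f P by auto
    have ra: "rev f = r' # a'" using last_rev_set(2)[OF fne f(3)] a'_def by simp
    have ff: "f = rev (r' # a')" using ra by (metis rev_rev_ident)
    have da: "distinct (r' # a')" using f(2) ra by (metis distinct_rev)
    have sa: "set (r' # a') = P" using f(1) ra by (metis set_rev)
    have rna: "\<forall>x\<in>set a'. x \<noteq> r" using sa P by auto
    have j: "?j a = a' @ r # q" using ad a'_def by simp
    show "?i (?j a) = a"
    proof -
      have tw: "takeWhile (\<lambda>x. x \<noteq> r) (a' @ r # q) = a'" using rna by simp
      have dw: "dropWhile (\<lambda>x. x \<noteq> r) (a' @ r # q) = r # q" using rna by simp
      show ?thesis unfolding j tw dw using ad ff sa by simp
    qed
    show "?j a \<in> ?T" unfolding j using da sa P q rne rV by (auto simp: permutations_of_set_def)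
    show "?h (?j a) = ?G a"
    proof -
      have c: "connr adj {r'} (a' @ r # q) \<longleftrightarrow> Cnd adj r r' P f q"
      proof -
        have "connr adj {r'} (a' @ r # q) \<longleftrightarrow> connr adj {r'} a' \<and> (\<exists>x\<in>{r'} \<union> set a'. adj x r) \<and> connr adj (insert r ({r'} \<union> set a')) q"
          by (simp add: connr_append)
        moreover have "{r'} \<union> set a' = P" using sa by simp
        moreover have "adj r' r" using sym rr by blast
        ultimately show ?thesis unfolding Cnd_def using P f a'_def by auto
      qed
      have dd: "distinct (r' # a' @ r # q)" using da sa P q by auto
      have sV: "set (r' # a' @ r # q) = V"
      proof -
        have "set (r' # a' @ r # q) = P \<union> {r} \<union> set q" using sa by auto
        then show ?thesis using P q rV by auto
      qed
      have zz: "(\<Sum>j\<in>set (r' # a' @ r # q). U j) = 0" using z sV by simp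
      have io: "iota (a' @ r # q) U = (-1)^(Suc (length a')) * (iota (rev (r' # a')) U * iota q U)"
        by (rule phi_split[OF dd zz])
      have cP: "card P = Suc (length a')" using da sa by (metis distinct_card length_Cons)
      show ?thesis unfolding j using c io cP ff ad by simp
    qed
  next
    fix b assume b: "b \<in> ?T"
    have sb: "set b = V - {r'}" "distinct b" using b by (auto simp: permutations_of_set_def)
    have rb: "r \<in> set b" using sb rV rne by auto
    define tw where "tw = takeWhile (\<lambda>x. x \<noteq> r) b"
    define q where "q = tl (dropWhile (\<lambda>x. x \<noteq> r) b)"
    have bd: "b = tw @ r # q" unfolding tw_def q_def by (rule split_at[OF rb])
    have ib: "?i b = (insert r' (set tw), (rev (r' # tw), q))" unfolding tw_def q_def by simp
    show "?j (?i b) = b" unfolding ib using bd by simp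
    show "?i b \<in> ?S'"
    proof -
      have dtw: "distinct (tw @ r # q)" using sb bd by simp
      have stw: "set (tw @ r # q) = V - {r'}" using sb bd by simp
      have r'tw: "r' \<notin> set tw" using stw by auto
      have rtw: "r \<notin> set tw" using dtw by simp
      have P: "insert r' (set tw) \<subseteq> V - {r}" using stw r'V rne rtw by auto
      have f: "rev (r' # tw) \<in> permutations_of_set (insert r' (set tw))" using dtw r'tw
        by (auto simp: permutations_of_set_def)
      have q: "q \<in> permutations_of_set (V - {r} - insert r' (set tw))"
      proof -
        have "set q = V - {r} - insert r' (set tw)" using stw dtw rne by auto
        then show ?thesis using dtw by (auto simp: permutations_of_set_def)
      qed
      show ?thesis unfolding ib using P f q by auto
    qed
  qed
  finally show ?thesis by (simp add: Croot_def)
qed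

theorem reroot_A:
  fixes U :: "nat \<Rightarrow> rat" and col :: "nat \<Rightarrow> bool"
  assumes fin: "finite V" and rV: "r \<in> V" and r'V: "r' \<in> V"
    and sym: "\<And>x y. adj x y \<Longrightarrow> adj y x"
    and colr: "\<And>x y. adj x y \<Longrightarrow> col x \<noteq> col y" and rr: "adj r r'"
    and z: "sum U V = 0" and gen: "\<And>S. S \<subseteq> V \<Longrightarrow> S \<noteq> {} \<Longrightarrow> S \<noteq> V \<Longrightarrow> sum U S \<noteq> 0"
  shows "Croot adj V r' U = - Croot adj V r U"
proof -
  have rne: "r \<noteq> r'" using colr[OF rr] by auto
  let ?W = "V - {r}"
  have finW: "finite ?W" using fin by simp
  have genW: "\<And>S. S \<subseteq> ?W \<Longrightarrow> S \<noteq> {} \<Longrightarrow> sum U S \<noteq> 0" using gen rV by auto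
  let ?C = "\<lambda>P f q. Cnd adj r r' P f q"
  have "- Croot adj V r U = (\<Sum>\<gamma>\<in>permutations_of_set ?W. \<Sum>P\<in>Pow ?W. if ?C P (filter (\<lambda>x. x\<in>P) \<gamma>) (filter (\<lambda>x. x\<notin>P) \<gamma>) then (-1)^card P * iota \<gamma> U else 0)"
    unfolding Croot_def sum_negf[symmetric]
  proof (rule sum.cong[OF refl])
    fix \<gamma> assume g: "\<gamma> \<in> permutations_of_set ?W"
    show "- (if connr adj {r} \<gamma> then iota \<gamma> U else 0) = (\<Sum>P\<in>Pow ?W. if ?C P (filter (\<lambda>x. x\<in>P) \<gamma>) (filter (\<lambda>x. x\<notin>P) \<gamma>) then (-1)^card P * iota \<gamma> U else 0)"
      using L1[where adj=adj and col=col and r=r and r'=r' and U=U, OF sym colr rr g] r'V rne by simp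
  qed
  also have "\<dots> = (\<Sum>P\<in>Pow ?W. \<Sum>\<gamma>\<in>permutations_of_set ?W. if ?C P (filter (\<lambda>x. x\<in>P) \<gamma>) (filter (\<lambda>x. x\<notin>P) \<gamma>) then (-1)^card P * iota \<gamma> U else 0)"
    by (rule sum.swap)
  also have "\<dots> = (\<Sum>P\<in>Pow ?W. \<Sum>fq\<in>permutations_of_set P \<times> permutations_of_set (?W - P). if ?C P (fst fq) (snd fq) then (-1)^card P * (iota (fst fq) U * iota (snd fq) U) else 0)"
    by (rule sum.cong[OF refl]) (rule L2[OF finW _ genW], simp)
  also have "\<dots> = (\<Sum>(P,fq)\<in>Sigma (Pow ?W) (\<lambda>P. permutations_of_set P \<times> permutations_of_set (?W - P)).
      if ?C P (fst fq) (snd fq) then (-1)^card P * (iota (fst fq) U * iota (snd fq) U) else 0)"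
    by (rule sum.Sigma) (use finW in auto)
  also have "\<dots> = Croot adj V r' U"
    by (rule L3[where adj=adj and U=U and r=r and r'=r' and V=V, symmetric, OF fin rV r'V rne sym rr z])
  finally show ?thesis by simp
qed

locale rr_setting =
  fixes adj :: "nat \<Rightarrow> nat \<Rightarrow> bool" and dep :: "nat \<Rightarrow> nat" and D :: "nat \<Rightarrow> bool" and k k' :: nat
  assumes sym: "\<And>x y. adj x y \<Longrightarrow> adj y x"
    and F1: "\<And>x y. adj x y \<Longrightarrow> dep x = dep y + 1 \<Longrightarrow> D y \<Longrightarrow> D x"
    and F2: "\<And>x y. D x \<Longrightarrow> adj x y \<Longrightarrow> dep x = dep y + 1 \<Longrightarrow> \<not> D y \<Longrightarrow> (x = k' \<and> y = k) \<or> (dep x = 2 \<and> dep y = 1)"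
    and F3: "\<And>x. D x \<Longrightarrow> dep x = 1 \<Longrightarrow> x = k'"
    and F4: "\<And>x. D x \<Longrightarrow> dep x = 2 \<Longrightarrow> adj x k'"
    and F5: "\<And>x y. adj x y \<Longrightarrow> dep x = 0 \<Longrightarrow> x = k"
    and F8: "\<And>x y. adj x y \<Longrightarrow> dep x = 1 \<Longrightarrow> adj x k"
    and F7: "D k'" "\<not> D k" "dep k = 0" "dep k' = 1" "adj k k'"
    and A3: "\<And>a b c d. distinct [a,b,c,d] \<Longrightarrow> adj a b \<Longrightarrow> dep a = dep b + 1 \<Longrightarrow> adj a c \<Longrightarrow> dep a = dep c + 1
               \<Longrightarrow> adj c d \<Longrightarrow> dep c = dep d + 1 \<Longrightarrow> adj b d"
    and A4: "\<And>a b c d e. distinct [a,b,c,d,e] \<Longrightarrow> adj a c \<Longrightarrow> dep a = dep c + 1 \<Longrightarrow> adj a d \<Longrightarrow> dep a = dep d + 1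
               \<Longrightarrow> adj b d \<Longrightarrow> dep b = dep d + 1 \<Longrightarrow> adj b e \<Longrightarrow> dep b = dep e + 1 \<Longrightarrow> adj a e \<or> adj b c"
begin

definition cov where "cov x y \<longleftrightarrow> adj x y \<and> dep x = dep y + 1"
definition cov' where "cov' x y \<longleftrightarrow> (cov x y \<and> (D x \<longleftrightarrow> D y)) \<or> (cov y x \<and> D y \<and> \<not> D x)"

lemma F6: "cov x y \<Longrightarrow> dep y = 0 \<Longrightarrow> y = k" using F5 sym unfolding cov_def by blast
lemma F1': "cov x y \<Longrightarrow> D y \<Longrightarrow> D x" using F1 unfolding cov_def by blast
lemma F2': "D x \<Longrightarrow> cov x y \<Longrightarrow> \<not> D y \<Longrightarrow> (x = k' \<and> y = k) \<or> (dep x = 2 \<and> dep y = 1)" using F2 unfolding cov_def by blast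
lemma F4': "D x \<Longrightarrow> dep x = 2 \<Longrightarrow> cov x k'" using F4 F7 unfolding cov_def by simp
lemma A3': "distinct [a,b,c,d] \<Longrightarrow> cov a b \<Longrightarrow> cov a c \<Longrightarrow> cov c d \<Longrightarrow> adj b d" using A3 unfolding cov_def by blast
lemma A4': "distinct [a,b,c,d,e] \<Longrightarrow> cov a c \<Longrightarrow> cov a d \<Longrightarrow> cov b d \<Longrightarrow> cov b e \<Longrightarrow> adj a e \<or> adj b c"
  using A4 unfolding cov_def by blast
lemma F8': "cov x y \<Longrightarrow> dep x = 1 \<Longrightarrow> adj x k" using F8 unfolding cov_def by blast

lemma A3new:
  assumes dst: "distinct [a,b,c,e]" and h: "cov' a b" "cov' a c" "cov' c e"
  shows "adj b e"
proof (cases "D a")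
  case True
  then have "cov a b" "cov a c" "cov c e" using h unfolding cov'_def by auto
  then show ?thesis using A3' dst by blast
next
  case nDa: False
  show ?thesis
  proof (cases "D c")
    case Dc: True
    have cca: "cov c a" using h(2) nDa Dc unfolding cov'_def by auto
    have cce: "cov c e" and De: "D e" using h(3) Dc unfolding cov'_def by auto
    from F2'[OF Dc cca nDa] show ?thesis
    proof
      assume "c = k' \<and> a = k"
      then have "dep a = 0" using F7 by simp
      moreover have "cov a b \<or> (cov b a \<and> D b)" using h(1) unfolding cov'_def by auto
      ultimately have "cov b a \<and> D b" unfolding cov_def by auto
      then have "b = k'" using F3 \<open>dep a = 0\<close> unfolding cov_def by auto
      then show ?thesis using \<open>c = k' \<and> a = k\<close> dst by simp
    next
      assume dd: "dep c = 2 \<and> dep a = 1"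
      then have "dep e = 1" using cce unfolding cov_def by simp
      then have ek: "e = k'" using F3 De by simp
      have "(cov a b \<and> \<not> D b) \<or> (cov b a \<and> D b)" using h(1) nDa unfolding cov'_def by auto
      then show ?thesis
      proof
        assume "cov a b \<and> \<not> D b"
        then have "b = k" using F6 dd unfolding cov_def by auto
        then show ?thesis using ek F7 by simp
      next
        assume "cov b a \<and> D b"
        then have "dep b = 2" using dd unfolding cov_def by simp
        then show ?thesis using F4 \<open>cov b a \<and> D b\<close> ek by simp
      qed
    qed
  next
    case nDc: False
    have cac: "cov a c" using h(2) nDa nDc unfolding cov'_def by auto
    have bcase: "(cov a b \<and> \<not> D b) \<or> (cov b a \<and> D b)" using h(1) nDa unfolding cov'_def by auto
    have ecase: "(cov c e \<and> \<not> D e) \<or> (cov e c \<and> D e)" using h(3) nDc unfolding cov'_def by auto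
    show ?thesis
    proof (cases "D b")
      case nDb: False
      have cab: "cov a b" using bcase nDb by auto
      show ?thesis
      proof (cases "D e")
        case False
        then have "cov c e" using ecase by auto
        then show ?thesis using A3'[OF dst cab cac] by simp
      next
        case De: True
        then have cec: "cov e c" using ecase by auto
        from F2'[OF De cec nDc] show ?thesis
        proof
          assume "e = k' \<and> c = k"
          then have "dep c = 0" using F7 by simp
          then have "dep b = 0" using cab cac unfolding cov_def by simp
          then have "b = k" using F6[OF cab] by simp
          then show ?thesis using \<open>e = k' \<and> c = k\<close> dst by simp
        next
          assume dd: "dep e = 2 \<and> dep c = 1"
          have cek: "cov e k'" using F4' De dd by simp
          have d5: "distinct [a, e, b, c, k']" using dst nDa De nDb nDc F7 dd by auto
          have "adj a k' \<or> adj e b" using A4'[OF d5 cab cac cec cek] .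
          then show ?thesis
          proof
            assume "adj a k'"
            then have "cov a k'" using cac dd F7 unfolding cov_def by simp
            then have "D a" using F1' F7 by blast
            then show ?thesis using nDa by simp
          next
            assume "adj e b" then show ?thesis using sym by blast
          qed
        qed
      qed
    next
      case Db: True
      have cba: "cov b a" using bcase Db by auto
      from F2'[OF Db cba nDa] show ?thesis
      proof
        assume "b = k' \<and> a = k"
        then have "dep a = 0" using F7 by simp
        then show ?thesis using cac unfolding cov_def by simp
      next
        assume dd: "dep b = 2 \<and> dep a = 1"
        then have "dep c = 0" using cac unfolding cov_def by simp
        then have ck: "c = k" using F6[OF cac] by simp
        show ?thesis using ecase
        proof
          assume "cov c e \<and> \<not> D e" then show ?thesis using \<open>dep c = 0\<close> unfolding cov_def by simp
        next
          assume "cov e c \<and> D e"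
          then have "dep e = 1" using \<open>dep c = 0\<close> unfolding cov_def by simp
          then have "e = k'" using F3 \<open>cov e c \<and> D e\<close> by simp
          then show ?thesis using F4 Db dd by simp
        qed
      qed
    qed
  qed
qed

lemma A4new:
  assumes dst: "distinct [a,b,c,d,e]" and h: "cov' a c" "cov' a d" "cov' b d" "cov' b e"
  shows "adj a e \<or> adj b c"
proof (cases "D a")
  case Da: True
  have cac: "cov a c" "D c" and cad: "cov a d" "D d" using h(1,2) Da unfolding cov'_def by auto
  show ?thesis
  proof (cases "D b")
    case True
    then have "cov b d" "cov b e" using h(3,4) cad(2) unfolding cov'_def by auto
    then show ?thesis using A4'[OF dst cac(1) cad(1)] by simp
  next
    case nDb: False
    have cdb: "cov d b" using h(3) nDb cad(2) unfolding cov'_def by auto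
    from F2'[OF cad(2) cdb nDb] show ?thesis
    proof
      assume dk: "d = k' \<and> b = k"
      have "(cov b e \<and> \<not> D e) \<or> (cov e b \<and> D e)" using h(4) nDb unfolding cov'_def by auto
      moreover have "dep b = 0" using dk F7 by simp
      ultimately have "cov e b \<and> D e" unfolding cov_def by auto
      then have "e = k'" using F3 \<open>dep b = 0\<close> unfolding cov_def by simp
      then show ?thesis using dk dst by simp
    next
      assume "dep d = 2 \<and> dep b = 1"
      have "distinct [a, c, d, b]" using dst by auto
      then have "adj c b" using A3'[OF _ cac(1) cad(1) cdb] by simp
      then show ?thesis using sym by blast
    qed
  qed
next
  case nDa: False
  have ccase: "(cov a c \<and> \<not> D c) \<or> (cov c a \<and> D c)" using h(1) nDa unfolding cov'_def by auto
  have dcase: "(cov a d \<and> \<not> D d) \<or> (cov d a \<and> D d)" using h(2) nDa unfolding cov'_def by auto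
  show ?thesis
  proof (cases "D b")
    case Db: True
    have cbd: "cov b d" "D d" and cbe: "cov b e" "D e" using h(3,4) Db unfolding cov'_def by auto
    have cda: "cov d a" using dcase cbd(2) by auto
    from F2'[OF cbd(2) cda nDa] show ?thesis
    proof
      assume dk: "d = k' \<and> a = k"
      then have "dep a = 0" using F7 by simp
      then have "cov c a \<and> D c" using ccase unfolding cov_def by auto
      then have "c = k'" using F3 \<open>dep a = 0\<close> unfolding cov_def by simp
      then show ?thesis using dk dst by simp
    next
      assume "dep d = 2 \<and> dep a = 1"
      have "distinct [b, e, d, a]" using dst by auto
      then have "adj e a" using A3'[OF _ cbe(1) cbd(1) cda] by simp
      then show ?thesis using sym by blast
    qed
  next
    case nDb: False
    have ecase: "(cov b e \<and> \<not> D e) \<or> (cov e b \<and> D e)" using h(4) nDb unfolding cov'_def by auto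
    show ?thesis
    proof (cases "D d")
      case nDd: False
      have cad: "cov a d" using dcase nDd by auto
      have cbd: "cov b d" using h(3) nDb nDd unfolding cov'_def by auto
      consider (1) "cov a c" "\<not> D c" "cov b e" "\<not> D e" | (2) "cov c a" "D c" "cov b e" "\<not> D e"
        | (3) "cov a c" "\<not> D c" "cov e b" "D e" | (4) "cov c a" "D c" "cov e b" "D e"
        using ccase ecase by blast
      then show ?thesis
      proof cases
        case 1 then show ?thesis using A4'[OF dst 1(1) cad cbd 1(3)] by simp
      next
        case 2
        from F2'[OF 2(2) 2(1) nDa] show ?thesis
        proof
          assume "c = k' \<and> a = k"
          then show ?thesis using cad F7 unfolding cov_def by simp
        next
          assume "dep c = 2 \<and> dep a = 1"
          then have "dep d = 0" "dep e = 0" using cad cbd 2(3) unfolding cov_def by auto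
          then have "d = k" "e = k" using F6 cad 2(3) by auto
          then show ?thesis using dst by simp
        qed
      next
        case 3
        from F2'[OF 3(4) 3(3) nDb] show ?thesis
        proof
          assume "e = k' \<and> b = k"
          then show ?thesis using cbd F7 unfolding cov_def by simp
        next
          assume "dep e = 2 \<and> dep b = 1"
          then have "dep d = 0" "dep c = 0" using cad cbd 3(1) unfolding cov_def by auto
          then have "d = k" "c = k" using F6 cad 3(1) by auto
          then show ?thesis using dst by simp
        qed
      next
        case 4
        have "\<not>(c = k' \<and> a = k)" using cad F7 unfolding cov_def by auto
        then have dc: "dep c = 2 \<and> dep a = 1" using F2'[OF 4(2) 4(1) nDa] by blast
        have "\<not>(e = k' \<and> b = k)" using cbd F7 unfolding cov_def by auto
        then have de: "dep e = 2 \<and> dep b = 1" using F2'[OF 4(4) 4(3) nDb] by blast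
        have ck: "cov c k'" "cov e k'" using F4' 4 dc de by auto
        have d5: "distinct [e, c, b, k', a]" using dst nDa nDb 4 F7 dc de by auto
        have "adj e a \<or> adj c b" using A4'[OF d5 4(3) ck(2) ck(1) 4(1)] .
        then show ?thesis using sym by blast
      qed
    next
      case Dd: True
      have cda: "cov d a" using dcase Dd by auto
      have cdb: "cov d b" using h(3) nDb Dd unfolding cov'_def by auto
      have dd: "dep d = 2 \<and> dep a = 1 \<and> dep b = 1"
      proof -
        have x1: "(d = k' \<and> a = k) \<or> (dep d = 2 \<and> dep a = 1)" using F2'[OF Dd cda nDa] .
        have x2: "(d = k' \<and> b = k) \<or> (dep d = 2 \<and> dep b = 1)" using F2'[OF Dd cdb nDb] .
        have "a \<noteq> b" using dst by simp
        then show ?thesis using x1 x2 F7(4) by auto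
      qed
      consider (1) "cov a c" "\<not> D c" | (2) "cov c a" "D c" using ccase by blast
      then show ?thesis
      proof cases
        case 1
        have "dep c = 0" using 1(1) dd unfolding cov_def by simp
        then have ck: "c = k" using F6 1(1) by simp
        show ?thesis using ecase
        proof
          assume "cov b e \<and> \<not> D e"
          then have "dep e = 0" using dd unfolding cov_def by simp
          then have "e = k" using F6[of b e] \<open>cov b e \<and> \<not> D e\<close> by simp
          then show ?thesis using ck dst by simp
        next
          assume "cov e b \<and> D e"
          have "adj b d" using cdb sym unfolding cov_def by blast
          then have "adj b k" using F8 dd by blast
          then show ?thesis using ck by simp
        qed
      next
        case 2
        show ?thesis using ecase
        proof
          assume "cov b e \<and> \<not> D e"
          then have "dep e = 0" using dd unfolding cov_def by simp
          then have "e = k" using F6[of b e] \<open>cov b e \<and> \<not> D e\<close> by simp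
          have "adj a d" using cda sym unfolding cov_def by blast
          then have "adj a k" using F8 dd by blast
          then show ?thesis using \<open>e = k\<close> by simp
        next
          assume ce: "cov e b \<and> D e"
          have dc: "dep c = 2" "dep e = 2" using 2 ce dd unfolding cov_def by auto
          have ck: "cov c k'" "cov e k'" using F4' 2 ce dc by auto
          have d5: "distinct [e, c, b, k', a]" using dst nDa nDb 2 ce F7 dc by auto
          have "adj e a \<or> adj c b" using A4'[OF d5 _ ck(2) ck(1) 2(1)] ce by blast
          then show ?thesis using sym by blast
        qed
      qed
    qed
  qed
qed

end

definition GS :: "(nat \<Rightarrow> nat \<Rightarrow> bool) \<Rightarrow> nat set \<Rightarrow> nat \<Rightarrow> (nat \<Rightarrow> nat) \<Rightarrow> bool" where
  "GS adj V k dep \<longleftrightarrow>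
    finite V \<and> k \<in> V \<and> dep k = 0 \<and> (\<forall>x\<in>V. x \<noteq> k \<longrightarrow> 0 < dep x) \<and>
    (\<forall>x y. adj x y \<longrightarrow> x \<in> V \<and> y \<in> V \<and> adj y x) \<and>
    (\<forall>x y. adj x y \<longrightarrow> dep x = dep y + 1 \<or> dep y = dep x + 1) \<and>
    (\<forall>x\<in>V. x \<noteq> k \<longrightarrow> (\<exists>y. adj x y \<and> dep x = dep y + 1)) \<and>
    (\<forall>a b c d. distinct [a,b,c,d] \<and> adj a b \<and> dep a = dep b + 1 \<and> adj a c \<and> dep a = dep c + 1
        \<and> adj c d \<and> dep c = dep d + 1 \<longrightarrow> adj b d) \<and>
    (\<forall>a b c d e. distinct [a,b,c,d,e] \<and> adj a c \<and> dep a = dep c + 1 \<and> adj a d \<and> dep a = dep d + 1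
        \<and> adj b d \<and> dep b = dep d + 1 \<and> adj b e \<and> dep b = dep e + 1 \<longrightarrow> adj a e \<or> adj b c)"

inductive Dn :: "(nat \<Rightarrow> nat \<Rightarrow> bool) \<Rightarrow> (nat \<Rightarrow> nat) \<Rightarrow> nat \<Rightarrow> nat \<Rightarrow> bool" for adj dep k' where
  Dn_base: "Dn adj dep k' k'"
| Dn_step: "Dn adj dep k' y \<Longrightarrow> adj x y \<Longrightarrow> dep x = dep y + 1 \<Longrightarrow> Dn adj dep k' x"

theorem GS_reroot:
  assumes G: "GS adj V k dep" and kk: "adj k k'"
  shows "GS adj V k' (\<lambda>x. if Dn adj dep k' x then dep x - 1 else dep x + 1)"
proof -
  let ?D = "Dn adj dep k'"
  let ?d = "\<lambda>x. if ?D x then dep x - 1 else dep x + 1"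
  have fin: "finite V" and kV: "k \<in> V" and dk: "dep k = 0" and pos: "\<And>x. x \<in> V \<Longrightarrow> x \<noteq> k \<Longrightarrow> 0 < dep x"
    and adjV: "\<And>x y. adj x y \<Longrightarrow> x \<in> V \<and> y \<in> V" and sym: "\<And>x y. adj x y \<Longrightarrow> adj y x"
    and diff: "\<And>x y. adj x y \<Longrightarrow> dep x = dep y + 1 \<or> dep y = dep x + 1"
    and low: "\<And>x. x \<in> V \<Longrightarrow> x \<noteq> k \<Longrightarrow> \<exists>y. adj x y \<and> dep x = dep y + 1"
    and A3: "\<And>a b c d. distinct [a,b,c,d] \<Longrightarrow> adj a b \<Longrightarrow> dep a = dep b + 1 \<Longrightarrow> adj a c \<Longrightarrow> dep a = dep c + 1
               \<Longrightarrow> adj c d \<Longrightarrow> dep c = dep d + 1 \<Longrightarrow> adj b d"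
    and A4: "\<And>a b c d e. distinct [a,b,c,d,e] \<Longrightarrow> adj a c \<Longrightarrow> dep a = dep c + 1 \<Longrightarrow> adj a d \<Longrightarrow> dep a = dep d + 1
               \<Longrightarrow> adj b d \<Longrightarrow> dep b = dep d + 1 \<Longrightarrow> adj b e \<Longrightarrow> dep b = dep e + 1 \<Longrightarrow> adj a e \<or> adj b c"
    using G unfolding GS_def by blast+
  have k'V: "k' \<in> V" using adjV kk by blast
  have dk': "dep k' = 1" using diff[OF kk] dk by auto
  have knk': "k \<noteq> k'" using dk dk' by auto
  have F5: "\<And>x y. adj x y \<Longrightarrow> dep x = 0 \<Longrightarrow> x = k" using pos adjV by fastforce
  have D0: "?D x \<Longrightarrow> 1 \<le> dep x" for x by (induction rule: Dn.induct) (use dk' in auto)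
  have nDk: "\<not> ?D k" using D0 dk by fastforce
  have Dx: "?D x \<Longrightarrow> x \<noteq> k' \<Longrightarrow> \<exists>y. adj x y \<and> dep x = dep y + 1 \<and> ?D y" for x
    by (induction rule: Dn.cases) auto
  have F3: "?D x \<Longrightarrow> dep x = 1 \<Longrightarrow> x = k'" for x
    using Dx D0 by fastforce
  have F4: "?D x \<Longrightarrow> dep x = 2 \<Longrightarrow> adj x k'" for x
  proof -
    assume Dxx: "?D x" and d2: "dep x = 2"
    then have "x \<noteq> k'" using dk' by auto
    then obtain y where "adj x y" "dep x = dep y + 1" "?D y" using Dx Dxx by blast
    then show ?thesis using F3 d2 by auto
  qed
  have L3: "?D x \<Longrightarrow> adj x y \<Longrightarrow> dep x = dep y + 1 \<Longrightarrow> 3 \<le> dep x \<Longrightarrow> ?D y" for x y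
  proof -
    assume Dxx: "?D x" and axy: "adj x y" "dep x = dep y + 1" and d3: "3 \<le> dep x"
    then have "x \<noteq> k'" using dk' by auto
    then obtain z where z: "adj x z" "dep x = dep z + 1" "?D z" using Dx Dxx by blast
    then have "z \<noteq> k'" using dk' d3 by auto
    then obtain t where t: "adj z t" "dep z = dep t + 1" "?D t" using Dx z(3) by blast
    show "?D y"
    proof (cases "y = z")
      case True then show ?thesis using z by simp
    next
      case False
      have "distinct [x, y, z, t]" using False axy z t by auto
      then have "adj y t" using A3[of x y z t] axy z t by blast
      then show ?thesis using Dn_step[OF t(3)] axy z t by simp
    qed
  qed
  have F2: "?D x \<Longrightarrow> adj x y \<Longrightarrow> dep x = dep y + 1 \<Longrightarrow> \<not> ?D y \<Longrightarrow> (x = k' \<and> y = k) \<or> (dep x = 2 \<and> dep y = 1)" for x y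
  proof -
    assume Dxx: "?D x" and axy: "adj x y" "dep x = dep y + 1" and nDy: "\<not> ?D y"
    have "1 \<le> dep x" using D0 Dxx by simp
    moreover have "\<not> 3 \<le> dep x" using L3 Dxx axy nDy by blast
    ultimately have "dep x = 1 \<or> dep x = 2" by auto
    then show ?thesis
    proof
      assume "dep x = 1"
      then have "x = k'" "dep y = 0" using F3 Dxx axy by auto
      then show ?thesis using F5 sym axy by blast
    next
      assume "dep x = 2" then show ?thesis using axy by simp
    qed
  qed
  have F8: "\<And>x y. adj x y \<Longrightarrow> dep x = 1 \<Longrightarrow> adj x k"
  proof -
    fix x y assume "adj x y" "dep x = 1"
    then have "x \<in> V" "x \<noteq> k" using adjV dk by auto
    then obtain z where "adj x z" "dep x = dep z + 1" using low by blast
    then show "adj x k" using F5 sym \<open>dep x = 1\<close> by fastforce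
  qed
  have RS: "rr_setting adj dep ?D k k'"
    apply unfold_locales
    apply (metis sym)
    apply (metis Dn_step)
    apply (metis F2)
    apply (metis F3)
    apply (metis F4)
    apply (metis F5)
    apply (metis F8)
    apply (rule Dn_base)
    apply (rule nDk)
    apply (rule dk)
    apply (rule dk')
    apply (rule kk)
    apply (metis A3)
    apply (metis A4)
    done
  interpret R: rr_setting adj dep ?D k k' by (rule RS)
  have cv: "adj x y \<Longrightarrow> ?d x = ?d y + 1 \<Longrightarrow> R.cov' x y" for x y
  proof -
    assume axy: "adj x y" and e: "?d x = ?d y + 1"
    have dd: "dep x = dep y + 1 \<or> dep y = dep x + 1" using diff[OF axy] .
    show ?thesis
    proof (cases "?D x"; cases "?D y")
      assume "?D x" "?D y"
      then have "1 \<le> dep x" "1 \<le> dep y" using D0 by auto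
      then show ?thesis using e \<open>?D x\<close> \<open>?D y\<close> axy unfolding R.cov'_def R.cov_def by auto
    next
      assume "?D x" "\<not> ?D y"
      then show ?thesis using e dd D0 by auto
    next
      assume "\<not> ?D x" "?D y"
      then have "1 \<le> dep y" using D0 by auto
      then show ?thesis using e \<open>\<not> ?D x\<close> \<open>?D y\<close> axy sym unfolding R.cov'_def R.cov_def by auto
    next
      assume "\<not> ?D x" "\<not> ?D y"
      then show ?thesis using e axy unfolding R.cov'_def R.cov_def by auto
    qed
  qed
  have g0: "?d k' = 0" using dk' Dn_base by simp
  have g1: "\<forall>x\<in>V. x \<noteq> k' \<longrightarrow> 0 < ?d x"
  proof (intro ballI impI)
    fix x assume "x \<in> V" "x \<noteq> k'"
    show "0 < ?d x"
    proof (cases "?D x")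
      case True
      then have "dep x \<noteq> 1" using F3 \<open>x \<noteq> k'\<close> by blast
      then show ?thesis using True D0[OF True] by simp
    qed simp
  qed
  have g2: "\<forall>x y. adj x y \<longrightarrow> x \<in> V \<and> y \<in> V \<and> adj y x" using adjV sym by blast
  have g3: "\<forall>x y. adj x y \<longrightarrow> ?d x = ?d y + 1 \<or> ?d y = ?d x + 1"
  proof (intro allI impI)
    fix x y assume axy: "adj x y"
    have "\<And>x y. adj x y \<Longrightarrow> dep x = dep y + 1 \<Longrightarrow> ?d x = ?d y + 1 \<or> ?d y = ?d x + 1"
    proof -
      fix x y assume a: "adj x y" "dep x = dep y + 1"
      show "?d x = ?d y + 1 \<or> ?d y = ?d x + 1"
      proof (cases "?D y")
        case True
        then have "?D x" using Dn_step a by blast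
        then show ?thesis using True D0[OF True] a by auto
      next
        case False
        then show ?thesis using a by auto
      qed
    qed
    then show "?d x = ?d y + 1 \<or> ?d y = ?d x + 1" using diff[OF axy] axy sym by blast
  qed
  have g4: "\<forall>x\<in>V. x \<noteq> k' \<longrightarrow> (\<exists>y. adj x y \<and> ?d x = ?d y + 1)"
  proof (intro ballI impI)
    fix x assume xV: "x \<in> V" and xk: "x \<noteq> k'"
    show "\<exists>y. adj x y \<and> ?d x = ?d y + 1"
    proof (cases "?D x")
      case True
      then obtain y where y: "adj x y" "dep x = dep y + 1" "?D y" using Dx xk by blast
      then show ?thesis using True D0[OF y(3)] by (intro exI[of _ y]) auto
    next
      case False
      show ?thesis
      proof (cases "x = k")
        case True
        then show ?thesis using kk dk dk' nDk Dn_base by (intro exI[of _ k']) auto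
      next
        case False
        then obtain y where y: "adj x y" "dep x = dep y + 1" using low xV by blast
        then have "\<not> ?D y" using \<open>\<not> ?D x\<close> Dn_step by blast
        then show ?thesis using y \<open>\<not> ?D x\<close> by (intro exI[of _ y]) auto
      qed
    qed
  qed
  have g5: "\<forall>a b c d. distinct [a,b,c,d] \<and> adj a b \<and> ?d a = ?d b + 1 \<and> adj a c \<and> ?d a = ?d c + 1
        \<and> adj c d \<and> ?d c = ?d d + 1 \<longrightarrow> adj b d"
  proof (intro allI impI)
    fix a b c d
    assume "distinct [a,b,c,d] \<and> adj a b \<and> ?d a = ?d b + 1 \<and> adj a c \<and> ?d a = ?d c + 1 \<and> adj c d \<and> ?d c = ?d d + 1"
    then show "adj b d" using R.A3new[of a b c d] cv[of a b] cv[of a c] cv[of c d] by blast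
  qed
  have g6: "\<forall>a b c d e. distinct [a,b,c,d,e] \<and> adj a c \<and> ?d a = ?d c + 1 \<and> adj a d \<and> ?d a = ?d d + 1
        \<and> adj b d \<and> ?d b = ?d d + 1 \<and> adj b e \<and> ?d b = ?d e + 1 \<longrightarrow> adj a e \<or> adj b c"
  proof (intro allI impI)
    fix a b c d e
    assume "distinct [a,b,c,d,e] \<and> adj a c \<and> ?d a = ?d c + 1 \<and> adj a d \<and> ?d a = ?d d + 1
        \<and> adj b d \<and> ?d b = ?d d + 1 \<and> adj b e \<and> ?d b = ?d e + 1"
    then show "adj a e \<or> adj b c" using R.A4new[of a b c d e] cv[of a c] cv[of a d] cv[of b d] cv[of b e] by blast
  qed
  show ?thesis unfolding GS_def
    by (intro conjI) (fact fin k'V g0 g1 g2 g3 g4 g5 g6)+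
qed

definition adjG :: "nat set set \<Rightarrow> (nat \<Rightarrow> nat) \<Rightarrow> nat \<Rightarrow> nat \<Rightarrow> nat \<Rightarrow> bool" where
  "adjG E h n x y \<longleftrightarrow> {x, y} \<in> E \<or> (x = 0 \<and> y \<in> {1..n} \<and> h y = 0) \<or> (y = 0 \<and> x \<in> {1..n} \<and> h x = 0)"

definition depG :: "(nat \<Rightarrow> nat) \<Rightarrow> nat \<Rightarrow> nat" where
  "depG h x = (if x = 0 then 0 else h x + 1)"

lemma shrubD1:
  assumes "shrub n E h"
  shows "\<forall>e\<in>E. \<exists>i j. e = {i, j} \<and> i \<noteq> j \<and> i \<in> {1..n} \<and> j \<in> {1..n}"
  using assms unfolding shrub_def by (elim conjE) assumption

lemma shrubD2:
  assumes "shrub n E h"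
  shows "\<forall>i j. {i, j} \<in> E \<longrightarrow> h i = h j + 1 \<or> h j = h i + 1"
  using assms unfolding shrub_def by (elim conjE) assumption

lemma shrubD3:
  assumes "shrub n E h"
  shows "\<forall>i\<in>{1..n}. 0 < h i \<longrightarrow> (\<exists>j\<in>{1..n}. covers E h i j)"
  using assms unfolding shrub_def by (elim conjE) assumption

lemma shrubD4:
  assumes "shrub n E h"
  shows "\<not> (\<exists>a\<in>{1..n}. \<exists>b\<in>{1..n}. \<exists>c\<in>{1..n}. \<exists>d\<in>{1..n}.
          distinct [a, b, c, d] \<and> covers E h a b \<and> covers E h a c \<and>
          covers E h c d \<and> {b, d} \<notin> E)"
  using assms unfolding shrub_def by (elim conjE) assumption

lemma shrubD5:
  assumes "shrub n E h"
  shows "\<not> (\<exists>a\<in>{1..n}. \<exists>b\<in>{1..n}. \<exists>c\<in>{1..n}. \<exists>d\<in>{1..n}. \<exists>e\<in>{1..n}.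
          distinct [a, b, c, d, e] \<and> covers E h a c \<and> covers E h a d \<and>
          covers E h b d \<and> covers E h b e \<and> {a, e} \<notin> E \<and> {b, c} \<notin> E)"
  using assms unfolding shrub_def by (elim conjE) assumption

lemma shrub_ax3:
  assumes "shrub n E h" "a\<in>{1..n}" "b\<in>{1..n}" "c\<in>{1..n}" "d\<in>{1..n}" "distinct [a, b, c, d]"
    "covers E h a b" "covers E h a c" "covers E h c d"
  shows "{b, d} \<in> E"
  using shrubD4[OF assms(1)] assms(2-) by blast

lemma shrub_ax4:
  assumes "shrub n E h" "a\<in>{1..n}" "b\<in>{1..n}" "c\<in>{1..n}" "d\<in>{1..n}" "e\<in>{1..n}" "distinct [a, b, c, d, e]"
    "covers E h a c" "covers E h a d" "covers E h b d" "covers E h b e"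
  shows "{a, e} \<in> E \<or> {b, c} \<in> E"
  using shrubD5[OF assms(1)] assms(2-) by blast

lemma shrub_edge:
  assumes "shrub n E h" "{x, y} \<in> E"
  shows "x \<in> {1..n}" "y \<in> {1..n}" "x \<noteq> y" "h x = h y + 1 \<or> h y = h x + 1"
proof -
  obtain i j where e: "{x,y} = {i,j}" "i \<noteq> j" "i \<in> {1..n}" "j \<in> {1..n}"
    using shrubD1[OF assms(1)] assms(2) by blast
  then show "x \<in> {1..n}" "y \<in> {1..n}" "x \<noteq> y" by (auto simp: doubleton_eq_iff)
  show "h x = h y + 1 \<or> h y = h x + 1" using shrubD2[OF assms(1)] assms(2) by blast
qed

lemma shrub_GS:
  assumes S: "shrub n E h"
  shows "GS (adjG E h n) {0..n} 0 (depG h)"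
proof -
  let ?a = "adjG E h n" and ?d = "depG h"
  have ax2: "\<And>i. i \<in> {1..n} \<Longrightarrow> 0 < h i \<Longrightarrow> \<exists>j\<in>{1..n}. covers E h i j" using shrubD3[OF S] by blast
  note ax3 = shrub_ax3[OF S] and ax4 = shrub_ax4[OF S]
  have E0: "\<And>x y. {x,y} \<in> E \<Longrightarrow> x \<noteq> 0 \<and> y \<noteq> 0" using shrub_edge[OF S] by fastforce
  have aV: "\<And>x y. ?a x y \<Longrightarrow> x \<in> {0..n} \<and> y \<in> {0..n}"
    unfolding adjG_def using shrub_edge[OF S] by fastforce
  have asym: "\<And>x y. ?a x y \<Longrightarrow> ?a y x" unfolding adjG_def by (auto simp: insert_commute)
  have adiff: "\<And>x y. ?a x y \<Longrightarrow> ?d x = ?d y + 1 \<or> ?d y = ?d x + 1"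
  proof -
    fix x y assume "?a x y"
    then consider "{x,y} \<in> E" | "x = 0 \<and> y \<in> {1..n} \<and> h y = 0" | "y = 0 \<and> x \<in> {1..n} \<and> h x = 0"
      unfolding adjG_def by blast
    then show "?d x = ?d y + 1 \<or> ?d y = ?d x + 1"
    proof cases
      case 1 then show ?thesis using E0[OF 1] shrub_edge(4)[OF S 1] by (auto simp: depG_def)
    qed (auto simp: depG_def)
  qed
  have cov_conv: "\<And>x y. ?a x y \<Longrightarrow> ?d x = ?d y + 1 \<Longrightarrow> y \<noteq> 0 \<Longrightarrow> covers E h x y \<and> x \<in> {1..n} \<and> y \<in> {1..n}"
  proof -
    fix x y assume a: "?a x y" "?d x = ?d y + 1" "y \<noteq> 0"
    then have "x \<noteq> 0" by (auto simp: depG_def split: if_splits)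
    then have "{x,y} \<in> E" using a unfolding adjG_def by auto
    then show "covers E h x y \<and> x \<in> {1..n} \<and> y \<in> {1..n}"
      using a \<open>x \<noteq> 0\<close> shrub_edge[OF S] by (auto simp: covers_def depG_def insert_commute)
  qed
  have d0: "\<And>x. x \<in> {0..n} \<Longrightarrow> ?d x = 0 \<Longrightarrow> x = 0" by (auto simp: depG_def split: if_splits)
  show ?thesis unfolding GS_def
  proof (intro conjI)
    show "finite {0..n}" by simp
    show "0 \<in> {0..n}" by simp
    show "?d 0 = 0" by (simp add: depG_def)
    show "\<forall>x\<in>{0..n}. x \<noteq> 0 \<longrightarrow> 0 < ?d x" by (simp add: depG_def)
    show "\<forall>x y. ?a x y \<longrightarrow> x \<in> {0..n} \<and> y \<in> {0..n} \<and> ?a y x" using aV asym by blast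
    show "\<forall>x y. ?a x y \<longrightarrow> ?d x = ?d y + 1 \<or> ?d y = ?d x + 1" using adiff by blast
    show "\<forall>x\<in>{0..n}. x \<noteq> 0 \<longrightarrow> (\<exists>y. ?a x y \<and> ?d x = ?d y + 1)"
    proof (intro ballI impI)
      fix x assume x: "x \<in> {0..n}" "x \<noteq> 0"
      show "\<exists>y. ?a x y \<and> ?d x = ?d y + 1"
      proof (cases "h x = 0")
        case True
        then show ?thesis using x by (intro exI[of _ 0]) (auto simp: adjG_def depG_def)
      next
        case False
        have "x \<in> {1..n}" using x by auto
        then obtain j where j: "j \<in> {1..n}" "covers E h x j" using ax2 False by blast
        then show ?thesis using x by (intro exI[of _ j]) (auto simp: adjG_def depG_def covers_def insert_commute)
      qed
    qed
    show "\<forall>a b c d. distinct [a,b,c,d] \<and> ?a a b \<and> ?d a = ?d b + 1 \<and> ?a a c \<and> ?d a = ?d c + 1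
        \<and> ?a c d \<and> ?d c = ?d d + 1 \<longrightarrow> ?a b d"
    proof (intro allI impI)
      fix a b c d assume h: "distinct [a,b,c,d] \<and> ?a a b \<and> ?d a = ?d b + 1 \<and> ?a a c \<and> ?d a = ?d c + 1
        \<and> ?a c d \<and> ?d c = ?d d + 1"
      show "?a b d"
      proof (cases "d = 0")
        case True
        then have "?d d = 0" by (simp add: depG_def)
        then have "?d c = 1" using h by simp
        then have "?d b = 1" using h by simp
        then have "b \<noteq> 0" "h b = 0" by (auto simp: depG_def split: if_splits)
        moreover have "b \<in> {0..n}" using aV h by blast
        ultimately show ?thesis using True by (auto simp: adjG_def)
      next
        case False
        have dpos: "?d d > 0" using False by (simp add: depG_def)
        then have "c \<noteq> 0" "b \<noteq> 0" using h by (auto simp: depG_def split: if_splits)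
        then have "covers E h a b \<and> a \<in> {1..n} \<and> b \<in> {1..n}" "covers E h a c \<and> c \<in> {1..n}"
          "covers E h c d \<and> d \<in> {1..n}" using cov_conv h False by blast+
        then have "{b,d} \<in> E" using ax3[of a b c d] h by blast
        then show ?thesis by (simp add: adjG_def)
      qed
    qed
    show "\<forall>a b c d e. distinct [a,b,c,d,e] \<and> ?a a c \<and> ?d a = ?d c + 1 \<and> ?a a d \<and> ?d a = ?d d + 1
        \<and> ?a b d \<and> ?d b = ?d d + 1 \<and> ?a b e \<and> ?d b = ?d e + 1 \<longrightarrow> ?a a e \<or> ?a b c"
    proof (intro allI impI)
      fix a b c d e assume h: "distinct [a,b,c,d,e] \<and> ?a a c \<and> ?d a = ?d c + 1 \<and> ?a a d \<and> ?d a = ?d d + 1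
        \<and> ?a b d \<and> ?d b = ?d d + 1 \<and> ?a b e \<and> ?d b = ?d e + 1"
      have cV: "c \<in> {0..n}" "d \<in> {0..n}" "e \<in> {0..n}" using aV h by blast+
      have eqd: "?d c = ?d d" "?d e = ?d d" using h by auto
      have nz: "c \<noteq> 0" "d \<noteq> 0" "e \<noteq> 0"
      proof -
        have "?d d \<noteq> 0"
        proof
          assume z: "?d d = 0"
          then have "c = 0" "d = 0" using d0 cV eqd by auto
          then show False using h by simp
        qed
        then show "c \<noteq> 0" "d \<noteq> 0" "e \<noteq> 0" using eqd by (auto simp: depG_def split: if_splits)
      qed
      have "covers E h a c \<and> a \<in> {1..n} \<and> c \<in> {1..n}" "covers E h a d \<and> d \<in> {1..n}"
        "covers E h b d \<and> b \<in> {1..n}" "covers E h b e \<and> e \<in> {1..n}" using cov_conv h nz by blast+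
      then have "{a,e} \<in> E \<or> {b,c} \<in> E" using ax4[of a b c d e] h by blast
      then show "?a a e \<or> ?a b c" by (auto simp: adjG_def)
    qed
  qed
qed

definition EG :: "(nat \<Rightarrow> nat \<Rightarrow> bool) \<Rightarrow> nat set set" where
  "EG adj = {{x, y} | x y. adj x y \<and> x \<noteq> 0 \<and> y \<noteq> 0}"

lemma GSD1: "GS adj V k dep \<Longrightarrow> finite V"
  unfolding GS_def by (elim conjE) assumption

lemma GSD2: "GS adj V k dep \<Longrightarrow> k \<in> V"
  unfolding GS_def by (elim conjE) assumption

lemma GSD3: "GS adj V k dep \<Longrightarrow> dep k = 0"
  unfolding GS_def by (elim conjE) assumption

lemma GSD4_raw: "GS adj V k dep \<Longrightarrow> (\<forall>x\<in>V. x \<noteq> k \<longrightarrow> 0 < dep x)"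
  unfolding GS_def by (elim conjE) assumption

lemma GSD4: assumes "GS adj V k dep" shows "\<And>x. x \<in> V \<Longrightarrow> x \<noteq> k \<Longrightarrow> 0 < dep x"
  using GSD4_raw[OF assms] by blast

lemma GSD5_raw: "GS adj V k dep \<Longrightarrow> (\<forall>x y. adj x y \<longrightarrow> x \<in> V \<and> y \<in> V \<and> adj y x)"
  unfolding GS_def by (elim conjE) assumption

lemma GSD5: assumes "GS adj V k dep" shows "\<And>x y. adj x y \<Longrightarrow> x \<in> V \<and> y \<in> V"
  using GSD5_raw[OF assms] by blast

lemma GSD6_raw: "GS adj V k dep \<Longrightarrow> (\<forall>x y. adj x y \<longrightarrow> x \<in> V \<and> y \<in> V \<and> adj y x)"
  unfolding GS_def by (elim conjE) assumption

lemma GSD6: assumes "GS adj V k dep" shows "\<And>x y. adj x y \<Longrightarrow> adj y x"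
  using GSD6_raw[OF assms] by blast

lemma GSD7_raw: "GS adj V k dep \<Longrightarrow> (\<forall>x y. adj x y \<longrightarrow> dep x = dep y + 1 \<or> dep y = dep x + 1)"
  unfolding GS_def by (elim conjE) assumption

lemma GSD7: assumes "GS adj V k dep" shows "\<And>x y. adj x y \<Longrightarrow> dep x = dep y + 1 \<or> dep y = dep x + 1"
  using GSD7_raw[OF assms] by blast

lemma GSD8_raw: "GS adj V k dep \<Longrightarrow> (\<forall>x\<in>V. x \<noteq> k \<longrightarrow> (\<exists>y. adj x y \<and> dep x = dep y + 1))"
  unfolding GS_def by (elim conjE) assumption

lemma GSD8: assumes "GS adj V k dep" shows "\<And>x. x \<in> V \<Longrightarrow> x \<noteq> k \<Longrightarrow> \<exists>y. adj x y \<and> dep x = dep y + 1"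
  using GSD8_raw[OF assms] by blast

lemma GSD9_raw: "GS adj V k dep \<Longrightarrow> (\<forall>a b c d. distinct [a,b,c,d] \<and> adj a b \<and> dep a = dep b + 1 \<and> adj a c \<and> dep a = dep c + 1
        \<and> adj c d \<and> dep c = dep d + 1 \<longrightarrow> adj b d)"
  unfolding GS_def by (elim conjE) assumption

lemma GSD9: assumes "GS adj V k dep" shows "\<And>a b c d. distinct [a,b,c,d] \<Longrightarrow> adj a b \<Longrightarrow> dep a = dep b + 1 \<Longrightarrow> adj a c \<Longrightarrow> dep a = dep c + 1
               \<Longrightarrow> adj c d \<Longrightarrow> dep c = dep d + 1 \<Longrightarrow> adj b d"
  using GSD9_raw[OF assms] by blast

lemma GSD10_raw: "GS adj V k dep \<Longrightarrow> (\<forall>a b c d e. distinct [a,b,c,d,e] \<and> adj a c \<and> dep a = dep c + 1 \<and> adj a d \<and> dep a = dep d + 1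
        \<and> adj b d \<and> dep b = dep d + 1 \<and> adj b e \<and> dep b = dep e + 1 \<longrightarrow> adj a e \<or> adj b c)"
  unfolding GS_def by (elim conjE) assumption

lemma GSD10: assumes "GS adj V k dep" shows "\<And>a b c d e. distinct [a,b,c,d,e] \<Longrightarrow> adj a c \<Longrightarrow> dep a = dep c + 1 \<Longrightarrow> adj a d \<Longrightarrow> dep a = dep d + 1
               \<Longrightarrow> adj b d \<Longrightarrow> dep b = dep d + 1 \<Longrightarrow> adj b e \<Longrightarrow> dep b = dep e + 1 \<Longrightarrow> adj a e \<or> adj b c"
  using GSD10_raw[OF assms] by blast

lemma GS_shrub:
  assumes G: "GS adj {0..n} 0 dep"
  shows "shrub n (EG adj) (\<lambda>x. dep x - 1) \<and> adjG (EG adj) (\<lambda>x. dep x - 1) n = adj"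
proof -
  let ?h = "\<lambda>x. dep x - 1" and ?E = "EG adj"
  note d0 = GSD3[OF G] and pos = GSD4[OF G] and adjV = GSD5[OF G] and sym = GSD6[OF G]
    and diff = GSD7[OF G] and low = GSD8[OF G] and A3 = GSD9[OF G] and A4 = GSD10[OF G]
  have EGmem: "{x,y} \<in> ?E \<longleftrightarrow> adj x y \<and> x \<noteq> 0 \<and> y \<noteq> 0" for x y
  proof
    assume "{x,y} \<in> ?E"
    then obtain x' y' where "{x,y} = {x',y'}" "adj x' y'" "x' \<noteq> 0" "y' \<noteq> 0" unfolding EG_def by blast
    then show "adj x y \<and> x \<noteq> 0 \<and> y \<noteq> 0" using sym by (auto simp: doubleton_eq_iff)
  qed (auto simp: EG_def)
  have nz1: "\<And>x. x \<in> {0..n} \<Longrightarrow> x \<noteq> 0 \<Longrightarrow> x \<in> {1..n}" by auto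
  have cv: "covers ?E ?h a b \<longleftrightarrow> adj a b \<and> dep a = dep b + 1 \<and> a \<noteq> 0 \<and> b \<noteq> 0" for a b
  proof
    assume "covers ?E ?h a b"
    then have "{b,a} \<in> ?E" "?h a = ?h b + 1" unfolding covers_def by auto
    then have "adj a b" "a \<noteq> 0" "b \<noteq> 0" using EGmem sym by auto
    moreover have "0 < dep a" "0 < dep b" using pos adjV \<open>adj a b\<close> \<open>a \<noteq> 0\<close> \<open>b \<noteq> 0\<close> by auto
    ultimately show "adj a b \<and> dep a = dep b + 1 \<and> a \<noteq> 0 \<and> b \<noteq> 0" using \<open>?h a = ?h b + 1\<close> by auto
  next
    assume a: "adj a b \<and> dep a = dep b + 1 \<and> a \<noteq> 0 \<and> b \<noteq> 0"
    then have "{b,a} \<in> ?E" using EGmem sym by blast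
    moreover have "0 < dep b" using pos adjV a by blast
    ultimately show "covers ?E ?h a b" using a unfolding covers_def by auto
  qed
  have s1: "\<forall>e\<in>?E. \<exists>i j. e = {i, j} \<and> i \<noteq> j \<and> i \<in> {1..n} \<and> j \<in> {1..n}"
  proof
    fix e assume "e \<in> ?E"
    then obtain x y where e: "e = {x,y}" "adj x y" "x \<noteq> 0" "y \<noteq> 0" unfolding EG_def by blast
    have "x \<noteq> y" using diff[OF e(2)] by auto
    then show "\<exists>i j. e = {i, j} \<and> i \<noteq> j \<and> i \<in> {1..n} \<and> j \<in> {1..n}" using e adjV[OF e(2)]
      by (intro exI[of _ x] exI[of _ y]) auto
  qed
  have s2: "\<forall>i j. {i, j} \<in> ?E \<longrightarrow> ?h i = ?h j + 1 \<or> ?h j = ?h i + 1"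
  proof (intro allI impI)
    fix i j assume "{i,j} \<in> ?E"
    then have a: "adj i j" "i \<noteq> 0" "j \<noteq> 0" using EGmem by auto
    then have "0 < dep i" "0 < dep j" using pos adjV by auto
    then show "?h i = ?h j + 1 \<or> ?h j = ?h i + 1" using diff[OF a(1)] by auto
  qed
  have s3: "\<forall>i\<in>{1..n}. 0 < ?h i \<longrightarrow> (\<exists>j\<in>{1..n}. covers ?E ?h i j)"
  proof (intro ballI impI)
    fix i assume i: "i \<in> {1..n}" "0 < ?h i"
    then obtain y where y: "adj i y" "dep i = dep y + 1" using low by force
    then have "y \<noteq> 0" using i d0 by (cases "y = 0") auto
    then have "covers ?E ?h i y" "y \<in> {1..n}" using cv y i adjV by auto
    then show "\<exists>j\<in>{1..n}. covers ?E ?h i j" by blast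
  qed
  have s4: "\<not> (\<exists>a\<in>{1..n}. \<exists>b\<in>{1..n}. \<exists>c\<in>{1..n}. \<exists>d\<in>{1..n}.
          distinct [a, b, c, d] \<and> covers ?E ?h a b \<and> covers ?E ?h a c \<and>
          covers ?E ?h c d \<and> {b, d} \<notin> ?E)"
  proof
    assume "\<exists>a\<in>{1..n}. \<exists>b\<in>{1..n}. \<exists>c\<in>{1..n}. \<exists>d\<in>{1..n}.
          distinct [a, b, c, d] \<and> covers ?E ?h a b \<and> covers ?E ?h a c \<and>
          covers ?E ?h c d \<and> {b, d} \<notin> ?E"
    then obtain a b c d where h: "distinct [a, b, c, d]" "covers ?E ?h a b" "covers ?E ?h a c"
          "covers ?E ?h c d" "{b, d} \<notin> ?E" by blast
    then have "adj b d" "b \<noteq> 0" "d \<noteq> 0" using A3[of a b c d] cv by blast+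
    then show False using h(5) EGmem by blast
  qed
  have s5: "\<not> (\<exists>a\<in>{1..n}. \<exists>b\<in>{1..n}. \<exists>c\<in>{1..n}. \<exists>d\<in>{1..n}. \<exists>e\<in>{1..n}.
          distinct [a, b, c, d, e] \<and> covers ?E ?h a c \<and> covers ?E ?h a d \<and>
          covers ?E ?h b d \<and> covers ?E ?h b e \<and> {a, e} \<notin> ?E \<and> {b, c} \<notin> ?E)"
  proof
    assume "\<exists>a\<in>{1..n}. \<exists>b\<in>{1..n}. \<exists>c\<in>{1..n}. \<exists>d\<in>{1..n}. \<exists>e\<in>{1..n}.
          distinct [a, b, c, d, e] \<and> covers ?E ?h a c \<and> covers ?E ?h a d \<and>
          covers ?E ?h b d \<and> covers ?E ?h b e \<and> {a, e} \<notin> ?E \<and> {b, c} \<notin> ?E"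
    then obtain a b c d e where h: "distinct [a, b, c, d, e]" "covers ?E ?h a c" "covers ?E ?h a d"
          "covers ?E ?h b d" "covers ?E ?h b e" "{a, e} \<notin> ?E" "{b, c} \<notin> ?E" by blast
    have c: "adj a c" "dep a = dep c + 1" "adj a d" "dep a = dep d + 1" "adj b d" "dep b = dep d + 1"
      "adj b e" "dep b = dep e + 1" "a \<noteq> 0" "b \<noteq> 0" "c \<noteq> 0" "e \<noteq> 0" using h(2-5) cv by blast+
    then have "adj a e \<or> adj b c" using A4[OF h(1)] by blast
    then show False using h(6,7) EGmem c by blast
  qed
  have sh: "shrub n ?E ?h" unfolding shrub_def using s1 s2 s3 s4 s5 by (intro conjI)
  have ae: "adjG ?E ?h n = adj"
  proof (intro ext)
    fix x y
    show "adjG ?E ?h n x y = adj x y"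
    proof (cases "x = 0 \<or> y = 0")
      case False
      then show ?thesis unfolding adjG_def using EGmem by auto
    next
      case True
      have a0: "adj 0 y \<longleftrightarrow> y \<in> {1..n} \<and> dep y = 1" for y
      proof
        assume a: "adj 0 y"
        have "dep y = 1" using diff[OF a] d0 by auto
        moreover have "y \<in> {0..n}" using adjV[OF a] by blast
        moreover have "y \<noteq> 0" using \<open>dep y = 1\<close> d0 by (cases "y = 0") auto
        ultimately show "y \<in> {1..n} \<and> dep y = 1" by auto
      next
        assume y: "y \<in> {1..n} \<and> dep y = 1"
        then obtain z where "adj y z" "dep y = dep z + 1" using low by force
        then have "z = 0" using pos adjV y by fastforce
        then show "adj 0 y" using sym \<open>adj y z\<close> by blast
      qed
      have h0: "y \<in> {1..n} \<Longrightarrow> (?h y = 0 \<longleftrightarrow> dep y = 1)" for y using pos[of y] by auto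
      have "\<not> {x,y} \<in> ?E" using True EGmem by auto
      then show ?thesis unfolding adjG_def using True a0 h0 sym by (metis atLeastAtMost_iff not_one_le_zero)
    qed
  qed
  show ?thesis using sh ae by simp
qed

lemma connr_nth: "connr adj A xs \<longleftrightarrow> (\<forall>j<length xs. \<exists>a \<in> A \<union> set (take j xs). adj a (xs!j))"
proof (induction xs arbitrary: A)
  case Nil then show ?case by simp
next
  case (Cons x xs)
  have "(\<forall>j<length (x#xs). \<exists>a \<in> A \<union> set (take j (x#xs)). adj a ((x#xs)!j)) \<longleftrightarrow>
        (\<exists>a\<in>A. adj a x) \<and> (\<forall>j<length xs. \<exists>a \<in> insert x A \<union> set (take j xs). adj a (xs!j))"
  proof -
    have "(\<forall>j<length (x#xs). \<exists>a \<in> A \<union> set (take j (x#xs)). adj a ((x#xs)!j)) \<longleftrightarrow>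
        (\<exists>a \<in> A \<union> set (take 0 (x#xs)). adj a ((x#xs)!0)) \<and> (\<forall>j<length xs. \<exists>a \<in> A \<union> set (take (Suc j) (x#xs)). adj a ((x#xs)!(Suc j)))"
      unfolding length_Cons by (rule All_less_Suc2)
    moreover have "\<And>j. A \<union> set (take (Suc j) (x#xs)) = insert x A \<union> set (take j xs)" by auto
    ultimately show ?thesis by simp
  qed
  then show ?case using Cons by simp
qed

lemma iota_cong: "(\<And>x. x \<in> set xs \<Longrightarrow> u x = v x) \<Longrightarrow> iota xs u = iota xs v"
proof -
  assume a: "\<And>x. x \<in> set xs \<Longrightarrow> u x = v x"
  have "\<And>k. (\<Sum>j\<in>set (drop k xs). u j) = (\<Sum>j\<in>set (drop k xs). v j)"
    by (rule sum.cong[OF refl]) (meson a in_set_dropD)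
  then show ?thesis by (simp add: iota_def)
qed

lemma before_distinct:
  assumes "distinct xs" "p < length xs"
  shows "before xs j (xs!p) \<longleftrightarrow> (\<exists>q<p. xs!q = j)"
proof
  assume "before xs j (xs!p)"
  then obtain k l where kl: "k < l" "l < length xs" "xs!k = j" "xs!l = xs!p" unfolding before_def by blast
  then have "l = p" using assms nth_eq_iff_index_eq by blast
  then show "\<exists>q<p. xs!q = j" using kl by blast
next
  assume "\<exists>q<p. xs!q = j"
  then show "before xs j (xs!p)" using assms unfolding before_def by blast
qed

lemma gamma_conn:
  assumes S: "shrub n E h" and xs: "xs \<in> total_orders n"
  shows "xs \<in> gamma_orders n E h \<longleftrightarrow> connr (adjG E h n) {0} xs"
proof -
  have sx: "set xs = {1..n}" "distinct xs" using xs by (auto simp: total_orders_def)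
  have inr: "\<And>p. p < length xs \<Longrightarrow> xs!p \<in> {1..n}" using sx nth_mem by blast
  have E0: "\<And>x y. {x,y} \<in> E \<Longrightarrow> x \<in> {1..n} \<and> y \<in> {1..n}" using shrub_edge[OF S] by blast
  show ?thesis
  proof
    assume g: "xs \<in> gamma_orders n E h"
    have g': "\<And>i. i \<in> {1..n} \<Longrightarrow> 0 < h i \<Longrightarrow> \<exists>j\<in>{1..n}. covers E h i j \<and> before xs j i"
      using g unfolding gamma_orders_def by blast
    show "connr (adjG E h n) {0} xs" unfolding connr_nth
    proof (intro allI impI)
      fix p assume p: "p < length xs"
      show "\<exists>a\<in>{0} \<union> set (take p xs). adjG E h n a (xs!p)"
      proof (cases "h (xs!p) = 0")
        case True then show ?thesis using inr[OF p] by (auto simp: adjG_def)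
      next
        case False
        then obtain j where j: "j \<in> {1..n}" "covers E h (xs!p) j" "before xs j (xs!p)" using g' inr[OF p] by blast
        then obtain q where q: "q < p" "xs!q = j" using before_distinct[OF sx(2) p] by blast
        then have "j \<in> set (take p xs)" using p by (metis in_set_conv_nth length_take min.absorb4 nth_take)
        moreover have "adjG E h n j (xs!p)" using j(2) unfolding covers_def adjG_def by auto
        ultimately show ?thesis by blast
      qed
    qed
  next
    assume c: "connr (adjG E h n) {0} xs"
    have cn: "\<And>p. p < length xs \<Longrightarrow> \<exists>a\<in>{0} \<union> set (take p xs). adjG E h n a (xs!p)"
      using c unfolding connr_nth by blast
    have Q: "\<And>p. p < length xs \<Longrightarrow> 0 < h (xs!p) \<Longrightarrow> \<exists>q<p. covers E h (xs!p) (xs!q)"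
    proof -
      fix p
      show "p < length xs \<Longrightarrow> 0 < h (xs!p) \<Longrightarrow> \<exists>q<p. covers E h (xs!p) (xs!q)"
      proof (induction p rule: less_induct)
        case (less p)
        let ?i = "xs!p"
        obtain a where a: "a \<in> {0} \<union> set (take p xs)" "adjG E h n a ?i" using cn less.prems(1) by blast
        have ai: "a \<noteq> 0"
        proof
          assume "a = 0"
          then show False using a(2) less.prems(2) E0 inr[OF less.prems(1)] unfolding adjG_def by fastforce
        qed
        then obtain q where q: "q < p" "xs!q = a" using a(1) less.prems(1)
          by (auto simp: in_set_conv_nth)
        have qlen: "q < length xs" using q less.prems(1) by simp
        have e: "{a, ?i} \<in> E" using a(2) ai inr[OF less.prems(1)] unfolding adjG_def by auto
        have hh: "h a = h ?i + 1 \<or> h ?i = h a + 1" using shrub_edge(4)[OF S e] .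
        show ?case
        proof (cases "h ?i = h a + 1")
          case True
          then have "covers E h ?i (xs!q)" using e q unfolding covers_def by simp
          then show ?thesis using q by blast
        next
          case False
          then have ha: "h a = h ?i + 1" using hh by simp
          then obtain q' where q': "q' < q" "covers E h a (xs!q')" using less.IH[OF q(1) qlen] q by auto
          let ?z = "xs!q'"
          have hz: "h ?z = h ?i" using q'(2) ha unfolding covers_def by simp
          then obtain r where r: "r < q'" "covers E h ?z (xs!r)" using less.IH[of q'] q' q less.prems by auto
          let ?t = "xs!r"
          have lens: "r < length xs" "q' < length xs" using r q' qlen by auto
          have dst: "distinct [a, ?i, ?z, ?t]"
            using sx(2) q q' r less.prems(1) lens by (auto simp: nth_eq_iff_index_eq)
          have cai: "covers E h a ?i" using e ha unfolding covers_def by (simp add: insert_commute)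
          have memb: "a \<in> {1..n}" "?i \<in> {1..n}" "?z \<in> {1..n}" "?t \<in> {1..n}"
            using inr lens qlen less.prems(1) q(2) by auto
          have "{?i, ?t} \<in> E" by (rule shrub_ax3[OF S memb dst cai q'(2) r(2)])
          moreover have "h ?i = h ?t + 1" using r(2) hz unfolding covers_def by simp
          ultimately have "covers E h ?i ?t" unfolding covers_def by (simp add: insert_commute)
          then show ?thesis using r q q' by (intro exI[of _ r]) auto
        qed
      qed
    qed
    show "xs \<in> gamma_orders n E h" unfolding gamma_orders_def
    proof (intro CollectI conjI ballI impI)
      show "xs \<in> total_orders n" by (rule xs)
      fix i assume i: "i \<in> {1..n}" "0 < h i"
      then obtain p where p: "p < length xs" "xs!p = i" using sx by (metis in_set_conv_nth)
      then obtain q where q: "q < p" "covers E h i (xs!q)" using Q i by blast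
      have "xs!q \<in> {1..n}" using inr q p by simp
      moreover have "before xs (xs!q) i" using before_distinct[OF sx(2) p(1)] p q by blast
      ultimately show "\<exists>j\<in>{1..n}. covers E h i j \<and> before xs j i" using q by blast
    qed
  qed
qed

lemma fP_Croot:
  assumes S: "shrub n E h"
  shows "fP n E h w = Croot (adjG E h n) {0..n} 0 (ext_u n w)"
proof -
  have T: "permutations_of_set ({0..n} - {0}) = total_orders n"
  proof -
    have "{0..n} - {0} = {1..n}" by auto
    then show ?thesis by (auto simp: permutations_of_set_def total_orders_def)
  qed
  have fin: "finite (total_orders n)" using T finite_permutations_of_set by metis
  have sub: "gamma_orders n E h \<subseteq> total_orders n" by (auto simp: gamma_orders_def)
  have "fP n E h w = (\<Sum>xs\<in>total_orders n. if xs \<in> gamma_orders n E h then iota xs w else 0)"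
  proof -
    have eq: "{xs \<in> total_orders n. xs \<in> gamma_orders n E h} = gamma_orders n E h" using sub by auto
    show ?thesis unfolding fP_def
      using sum.inter_filter[OF fin, of "\<lambda>xs. iota xs w" "\<lambda>xs. xs \<in> gamma_orders n E h"] unfolding eq .

  qed
  also have "\<dots> = (\<Sum>xs\<in>total_orders n. if connr (adjG E h n) {0} xs then iota xs (ext_u n w) else 0)"
  proof (rule sum.cong[OF refl])
    fix xs assume xs: "xs \<in> total_orders n"
    have "iota xs w = iota xs (ext_u n w)"
      by (rule iota_cong) (use xs in \<open>auto simp: total_orders_def ext_u_def\<close>)
    then show "(if xs \<in> gamma_orders n E h then iota xs w else 0) = (if connr (adjG E h n) {0} xs then iota xs (ext_u n w) else 0)"
      using gamma_conn[OF S xs] by simp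
  qed
  finally show ?thesis unfolding Croot_def T .
qed

lemma connr_map:
  assumes "\<And>x y. adj' (\<sigma> x) (\<sigma> y) = adj x y"
  shows "connr adj' (\<sigma> ` A) (map \<sigma> \<gamma>) = connr adj A \<gamma>"
proof (induction \<gamma> arbitrary: A)
  case Nil then show ?case by simp
next
  case (Cons x xs)
  have "(\<exists>a\<in>\<sigma> ` A. adj' a (\<sigma> x)) = (\<exists>a\<in>A. adj a x)" using assms by auto
  moreover have "insert (\<sigma> x) (\<sigma> ` A) = \<sigma> ` insert x A" by simp
  ultimately show ?case using Cons[of "insert x A"] by simp
qed

lemma iota_map:
  assumes "inj \<sigma>"
  shows "iota (map \<sigma> \<gamma>) U = iota \<gamma> (\<lambda>x. U (\<sigma> x))"
proof -
  have "\<And>k. (\<Sum>j\<in>set (drop k (map \<sigma> \<gamma>)). U j) = (\<Sum>j\<in>set (drop k \<gamma>). U (\<sigma> j))"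
  proof -
    fix k
    have "set (drop k (map \<sigma> \<gamma>)) = \<sigma> ` set (drop k \<gamma>)" by (simp add: drop_map)
    then show "(\<Sum>j\<in>set (drop k (map \<sigma> \<gamma>)). U j) = (\<Sum>j\<in>set (drop k \<gamma>). U (\<sigma> j))"
      using sum.reindex[of \<sigma> "set (drop k \<gamma>)" U] assms by (simp add: inj_on_def inj_def)
  qed
  then show ?thesis by (simp add: iota_def)
qed

lemma distinct_map_inj: "inj f \<Longrightarrow> distinct (map f xs) = distinct xs"
  by (induct xs) (auto simp: inj_image_mem_iff)

lemma Croot_cong: "(\<And>x. x \<in> V \<Longrightarrow> U x = U' x) \<Longrightarrow> Croot adj V k U = Croot adj V k U'"
proof -
  assume a: "\<And>x. x \<in> V \<Longrightarrow> U x = U' x"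
  show ?thesis unfolding Croot_def
  proof (rule sum.cong[OF refl])
    fix \<gamma> assume g: "\<gamma> \<in> permutations_of_set (V - {k})"
    have "iota \<gamma> U = iota \<gamma> U'" by (rule iota_cong) (use g a in \<open>auto simp: permutations_of_set_def\<close>)
    then show "(if connr adj {k} \<gamma> then iota \<gamma> U else 0) = (if connr adj {k} \<gamma> then iota \<gamma> U' else 0)" by simp
  qed
qed

lemma Croot_relabel:
  assumes p: "\<sigma> permutes V"
  shows "Croot adj V k (\<lambda>x. U (\<sigma> x)) = Croot (\<lambda>x y. adj (inv \<sigma> x) (inv \<sigma> y)) V (\<sigma> k) U"
proof -
  let ?a = "\<lambda>x y. adj (inv \<sigma> x) (inv \<sigma> y)"
  have inj: "inj \<sigma>" using p permutes_inj by blast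
  have iv1: "\<And>x. inv \<sigma> (\<sigma> x) = x" and iv2: "\<And>x. \<sigma> (inv \<sigma> x) = x" using permutes_inverses[OF p] by auto
  have aa: "\<And>x y. ?a (\<sigma> x) (\<sigma> y) = adj x y" using iv1 by simp
  have img: "\<sigma> ` (V - {k}) = V - {\<sigma> k}" using permutes_image[OF p] inj by (simp add: image_set_diff)
  have img2: "inv \<sigma> ` (V - {\<sigma> k}) = V - {k}"
  proof -
    have "inv \<sigma> ` (V - {\<sigma> k}) = inv \<sigma> ` (\<sigma> ` (V - {k}))" using img by simp
    also have "\<dots> = V - {k}" using iv1 by (simp add: image_comp o_def)
    finally show ?thesis .
  qed
  have injv: "inj (inv \<sigma>)" using iv2 by (metis injI)
  show ?thesis unfolding Croot_def
  proof (rule sum.reindex_bij_witness[where i = "map (inv \<sigma>)" and j = "map \<sigma>"])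
    fix \<gamma> assume g: "\<gamma> \<in> permutations_of_set (V - {k})"
    show "map (inv \<sigma>) (map \<sigma> \<gamma>) = \<gamma>" using iv1 by (simp add: map_idI)
    show "map \<sigma> \<gamma> \<in> permutations_of_set (V - {\<sigma> k})"
    proof -
      have "set (map \<sigma> \<gamma>) = V - {\<sigma> k}" using g img by (simp add: permutations_of_set_def)
      moreover have "distinct (map \<sigma> \<gamma>)" using g distinct_map_inj[OF inj] by (simp add: permutations_of_set_def)
      ultimately show ?thesis by (simp add: permutations_of_set_def)
    qed
    have c: "connr ?a {\<sigma> k} (map \<sigma> \<gamma>) = connr adj {k} \<gamma>"
      using connr_map[of ?a \<sigma> adj "{k}" \<gamma>] aa by simp
    show "(if connr ?a {\<sigma> k} (map \<sigma> \<gamma>) then iota (map \<sigma> \<gamma>) U else 0) = (if connr adj {k} \<gamma> then iota \<gamma> (\<lambda>x. U (\<sigma> x)) else 0)"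
      unfolding c iota_map[OF inj] ..
  next
    fix \<delta> assume d: "\<delta> \<in> permutations_of_set (V - {\<sigma> k})"
    show "map \<sigma> (map (inv \<sigma>) \<delta>) = \<delta>" using iv2 by (simp add: map_idI)
    show "map (inv \<sigma>) \<delta> \<in> permutations_of_set (V - {k})"
    proof -
      have "set (map (inv \<sigma>) \<delta>) = V - {k}" using d img2 by (simp add: permutations_of_set_def)
      moreover have "distinct (map (inv \<sigma>) \<delta>)" using d distinct_map_inj[OF injv] by (simp add: permutations_of_set_def)
      ultimately show ?thesis by (simp add: permutations_of_set_def)
    qed
  qed
qed

lemma GS_relabel:
  assumes G: "GS adj V k dep" and p: "\<sigma> permutes V"
  shows "GS (\<lambda>x y. adj (inv \<sigma> x) (inv \<sigma> y)) V (\<sigma> k) (\<lambda>x. dep (inv \<sigma> x))"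
proof -
  let ?t = "inv \<sigma>"
  let ?a = "\<lambda>x y. adj (?t x) (?t y)" and ?d = "\<lambda>x. dep (?t x)"
  have pt: "?t permutes V" using permutes_inv[OF p] .
  have iv1: "\<And>x. ?t (\<sigma> x) = x" and iv2: "\<And>x. \<sigma> (?t x) = x" using permutes_inverses[OF p] by auto
  have injt: "inj ?t" using iv2 by (metis injI)
  have tV: "\<And>x. ?t x \<in> V \<longleftrightarrow> x \<in> V" using permutes_in_image[OF pt] by blast
  have sV: "\<And>x. \<sigma> x \<in> V \<longleftrightarrow> x \<in> V" using permutes_in_image[OF p] by blast
  have dst: "\<And>xs. distinct (map ?t xs) = distinct xs" using distinct_map_inj[OF injt] by blast
  have g0: "finite V" using GSD1[OF G] .
  have g1: "\<sigma> k \<in> V" using GSD2[OF G] sV by blast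
  have g2: "?d (\<sigma> k) = 0" using GSD3[OF G] iv1 by simp
  have g3: "\<forall>x\<in>V. x \<noteq> \<sigma> k \<longrightarrow> 0 < ?d x"
  proof (intro ballI impI)
    fix x assume "x \<in> V" "x \<noteq> \<sigma> k"
    then have "?t x \<in> V" "?t x \<noteq> k" using tV iv2 by (blast, metis)
    then show "0 < ?d x" using GSD4[OF G] by blast
  qed
  have g4: "\<forall>x y. ?a x y \<longrightarrow> x \<in> V \<and> y \<in> V \<and> ?a y x" using GSD5[OF G] GSD6[OF G] tV by blast
  have g5: "\<forall>x y. ?a x y \<longrightarrow> ?d x = ?d y + 1 \<or> ?d y = ?d x + 1" using GSD7[OF G] by blast
  have g6: "\<forall>x\<in>V. x \<noteq> \<sigma> k \<longrightarrow> (\<exists>y. ?a x y \<and> ?d x = ?d y + 1)"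
  proof (intro ballI impI)
    fix x assume "x \<in> V" "x \<noteq> \<sigma> k"
    then have "?t x \<in> V" "?t x \<noteq> k" using tV iv2 by (blast, metis)
    then obtain y where "adj (?t x) y" "dep (?t x) = dep y + 1" using GSD8[OF G] by blast
    then show "\<exists>y. ?a x y \<and> ?d x = ?d y + 1" using iv1 by (intro exI[of _ "\<sigma> y"]) simp
  qed
  have g7: "\<forall>a b c d. distinct [a,b,c,d] \<and> ?a a b \<and> ?d a = ?d b + 1 \<and> ?a a c \<and> ?d a = ?d c + 1
        \<and> ?a c d \<and> ?d c = ?d d + 1 \<longrightarrow> ?a b d"
  proof (intro allI impI)
    fix a b c d assume h: "distinct [a,b,c,d] \<and> ?a a b \<and> ?d a = ?d b + 1 \<and> ?a a c \<and> ?d a = ?d c + 1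
        \<and> ?a c d \<and> ?d c = ?d d + 1"
    have "distinct [?t a, ?t b, ?t c, ?t d]" using h dst[of "[a,b,c,d]"] by simp
    then show "?a b d" using GSD9[OF G] h by blast
  qed
  have g8: "\<forall>a b c d e. distinct [a,b,c,d,e] \<and> ?a a c \<and> ?d a = ?d c + 1 \<and> ?a a d \<and> ?d a = ?d d + 1
        \<and> ?a b d \<and> ?d b = ?d d + 1 \<and> ?a b e \<and> ?d b = ?d e + 1 \<longrightarrow> ?a a e \<or> ?a b c"
  proof (intro allI impI)
    fix a b c d e assume h: "distinct [a,b,c,d,e] \<and> ?a a c \<and> ?d a = ?d c + 1 \<and> ?a a d \<and> ?d a = ?d d + 1
        \<and> ?a b d \<and> ?d b = ?d d + 1 \<and> ?a b e \<and> ?d b = ?d e + 1"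
    have "distinct [?t a, ?t b, ?t c, ?t d, ?t e]" using h dst[of "[a,b,c,d,e]"] by simp
    then show "?a a e \<or> ?a b c" using GSD10[OF G] h by blast
  qed
  show ?thesis unfolding GS_def by (intro conjI) (fact g0 g1 g2 g3 g4 g5 g6 g7 g8)+
qed

definition genV :: "nat set \<Rightarrow> (nat \<Rightarrow> rat) \<Rightarrow> bool" where
  "genV V U \<longleftrightarrow> (\<forall>S. S \<subseteq> V \<longrightarrow> S \<noteq> {} \<longrightarrow> S \<noteq> V \<longrightarrow> sum U S \<noteq> 0)"

lemma chain:
  assumes G: "GS adj V r0 dep"
  shows "k \<in> V \<Longrightarrow> (\<exists>d. GS adj V k d) \<and> (\<forall>U. sum U V = 0 \<longrightarrow> genV V U \<longrightarrow> Croot adj V k U = (-1)^(dep k) * Croot adj V r0 U)"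
proof -
  have "\<forall>k\<in>V. dep k = m \<longrightarrow> (\<exists>d. GS adj V k d) \<and> (\<forall>U. sum U V = 0 \<longrightarrow> genV V U \<longrightarrow> Croot adj V k U = (-1)^(dep k) * Croot adj V r0 U)" for m
  proof (induction m)
    case 0
    show ?case
    proof (intro ballI impI)
      fix k assume "k \<in> V" "dep k = 0"
      then have "k = r0" using GSD4[OF G] by fastforce
      then show "(\<exists>d. GS adj V k d) \<and> (\<forall>U. sum U V = 0 \<longrightarrow> genV V U \<longrightarrow> Croot adj V k U = (-1)^(dep k) * Croot adj V r0 U)"
        using G \<open>dep k = 0\<close> by auto
    qed
  next
    case (Suc m)
    show ?case
    proof (intro ballI impI)
      fix k assume kV: "k \<in> V" and dk: "dep k = Suc m"
      then have "k \<noteq> r0" using GSD3[OF G] by auto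
      then obtain y where y: "adj k y" "dep k = dep y + 1" using GSD8[OF G] kV by blast
      have yV: "y \<in> V" using GSD5[OF G] y(1) by blast
      have dy: "dep y = m" using y dk by simp
      from Suc.IH yV dy obtain d where dG: "GS adj V y d"
        and cy: "\<And>U. sum U V = 0 \<Longrightarrow> genV V U \<Longrightarrow> Croot adj V y U = (-1)^(dep y) * Croot adj V r0 U" by blast
      have yk: "adj y k" using GSD6[OF G] y(1) by blast
      have GSk: "GS adj V k (\<lambda>x. if Dn adj d k x then d x - 1 else d x + 1)" by (rule GS_reroot[OF dG yk])
      have col: "\<And>x z. adj x z \<Longrightarrow> even (dep x) \<noteq> even (dep z)" using GSD7[OF G] by fastforce
      have "\<forall>U. sum U V = 0 \<longrightarrow> genV V U \<longrightarrow> Croot adj V k U = (-1)^(dep k) * Croot adj V r0 U"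
      proof (intro allI impI)
        fix U :: "nat \<Rightarrow> rat" assume z: "sum U V = 0" and g: "genV V U"
        have "Croot adj V k U = - Croot adj V y U"
          by (rule reroot_A[where col = "\<lambda>x. even (dep x)" and adj=adj and U=U and V=V and r=y and r'=k, OF GSD1[OF G] yV kV GSD6[OF G] col yk z])
             (use g in \<open>auto simp: genV_def\<close>)
        then show "Croot adj V k U = (-1)^(dep k) * Croot adj V r0 U" using cy[OF z g] dy dk by simp
      qed
      then show "(\<exists>d. GS adj V k d) \<and> (\<forall>U. sum U V = 0 \<longrightarrow> genV V U \<longrightarrow> Croot adj V k U = (-1)^(dep k) * Croot adj V r0 U)"
        using GSk by blast
    qed
  qed
  then show "k \<in> V \<Longrightarrow> ?thesis" by blast
qed

lemma ext_u_sum: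
  "sum (ext_u n u) {0..n} = 0"
proof -
  have "{0..n} = insert 0 {1..n}" by auto
  then have "sum (ext_u n u) {0..n} = ext_u n u 0 + sum (ext_u n u) {1..n}" by simp
  moreover have "sum (ext_u n u) {1..n} = sum u {1..n}" by (rule sum.cong) (auto simp: ext_u_def)
  ultimately show ?thesis by (simp add: ext_u_def)
qed

lemma ext_u_gen:
  assumes g: "generic n u"
  shows "genV {0..n} (ext_u n u)"
  unfolding genV_def
proof (intro allI impI)
  fix S assume S: "S \<subseteq> {0..n}" "S \<noteq> {}" "S \<noteq> {0..n}"
  show "sum (ext_u n u) S \<noteq> 0"
  proof (cases "0 \<in> S")
    case False
    have S1: "S \<subseteq> {1..n}"
    proof
      fix x assume "x \<in> S" then show "x \<in> {1..n}" using S(1) False by (cases x) auto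
    qed
    have "sum (ext_u n u) S = sum u S" by (rule sum.cong) (use False in \<open>auto simp: ext_u_def\<close>)
    then show ?thesis using g S1 S(2) unfolding generic_def by auto
  next
    case True
    let ?S' = "S - {0}" and ?T = "{1..n} - S"
    have S'1: "?S' \<subseteq> {1..n}" using S by auto
    have Tne: "?T \<noteq> {}"
    proof
      assume "?T = {}"
      then have "{0..n} \<subseteq> S" using True by (auto simp: subset_iff) (metis One_nat_def Suc_leI neq0_conv)
      then show False using S by auto
    qed
    have T1: "?T \<subseteq> {1..n}" by auto
    have "sum (ext_u n u) S = ext_u n u 0 + sum (ext_u n u) ?S'"
      using True S by (metis finite_atLeastAtMost finite_subset sum.remove)
    also have "sum (ext_u n u) ?S' = sum u ?S'" by (rule sum.cong) (auto simp: ext_u_def)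
    also have "sum u {1..n} = sum u ?S' + sum u ?T"
    proof -
      have "{1..n} = ?S' \<union> ?T" using S'1 by auto
      moreover have "?S' \<inter> ?T = {}" by auto
      ultimately show ?thesis by (metis finite_atLeastAtMost finite_Diff sum.union_disjoint finite_subset S'1)
    qed
    then have "ext_u n u 0 + sum u ?S' = - sum u ?T" by (simp add: ext_u_def)
    finally have "sum (ext_u n u) S = - sum u ?T" .
    moreover have "sum u ?T \<noteq> 0" using g T1 Tne unfolding generic_def by blast
    ultimately show ?thesis by simp
  qed
qed

lemma sign_cases: "((-1::rat)^m) \<in> {1, -1}"
  by (induct m) auto

theorem mainTheorem16:
  fixes n :: nat and \<sigma> :: "nat \<Rightarrow> nat" and E :: "nat set set" and h :: "nat \<Rightarrow> nat"
  assumes "1 \<le> n" and "\<sigma> permutes {0..n}" and "shrub n E h"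
  shows "\<exists>(\<epsilon>::rat) E' h'. \<epsilon> \<in> {1, -1} \<and> shrub n E' h' \<and>
           (\<forall>u. generic n u \<longrightarrow> mould_act n \<sigma> (fP n E h) u = \<epsilon> * fP n E' h' u)"
proof -
  note p = assms(2)
  define V where "V = {0..n}"
  define adj where "adj = adjG E h n"
  have G0: "GS adj V 0 (depG h)" unfolding adj_def V_def by (rule shrub_GS[OF assms(3)])
  define k where "k = inv \<sigma> 0"
  have kV: "k \<in> V" unfolding k_def V_def using permutes_in_image[OF permutes_inv[OF p]] by simp
  have sk: "\<sigma> k = 0" unfolding k_def using permutes_inverses(1)[OF p] by simp
  from chain[OF G0 kV] obtain d where Gk: "GS adj V k d"
    and cform: "\<And>U. sum U V = 0 \<Longrightarrow> genV V U \<Longrightarrow> Croot adj V k U = (-1)^(depG h k) * Croot adj V 0 U" by blast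
  define adjs where "adjs = (\<lambda>x y. adj (inv \<sigma> x) (inv \<sigma> y))"
  have pV: "\<sigma> permutes V" using p V_def by simp
  have Gs: "GS adjs V 0 (\<lambda>x. d (inv \<sigma> x))" using GS_relabel[OF Gk pV] sk unfolding adjs_def by simp
  define h' where "h' = (\<lambda>x. d (inv \<sigma> x) - 1)"
  have sh: "shrub n (EG adjs) h'" and ae: "adjG (EG adjs) h' n = adjs"
    using GS_shrub[of adjs n "\<lambda>x. d (inv \<sigma> x)"] Gs unfolding V_def h'_def by auto
  define \<epsilon> where "\<epsilon> = ((-1::rat)^(depG h k))"
  have eps: "\<epsilon> \<in> {1, -1}" unfolding \<epsilon>_def by (rule sign_cases)
  have ee: "\<epsilon> * \<epsilon> = 1" using eps by auto
  have main: "mould_act n \<sigma> (fP n E h) u = \<epsilon> * fP n (EG adjs) h' u" if gu: "generic n u" for u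
  proof -
    define U where "U = ext_u n u"
    define W where "W = (\<lambda>x. U (\<sigma> x))"
    define v where "v = (\<lambda>i. ext_u n u (\<sigma> i))"
    have zU: "sum U V = 0" unfolding U_def V_def by (rule ext_u_sum)
    have gU: "genV V U" unfolding U_def V_def by (rule ext_u_gen[OF gu])
    have injs: "inj \<sigma>" using permutes_inj[OF pV] .
    have zW: "sum W V = 0"
    proof -
      have "sum U V = sum (U \<circ> \<sigma>) V" by (rule sum.permute[OF pV])
      then show ?thesis using zU unfolding W_def by (simp add: o_def)
    qed
    have gW: "genV V W" unfolding genV_def
    proof (intro allI impI)
      fix S assume S: "S \<subseteq> V" "S \<noteq> {}" "S \<noteq> V"
      have "sum W S = sum U (\<sigma> ` S)" unfolding W_def
        using sum.reindex[of \<sigma> S U] injs by (simp add: inj_on_def inj_def)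
      moreover have "\<sigma> ` S \<subseteq> V" using S(1) permutes_image[OF pV] by blast
      moreover have "\<sigma> ` S \<noteq> {}" using S(2) by simp
      moreover have "\<sigma> ` S \<noteq> V"
      proof
        assume "\<sigma> ` S = V"
        then have "\<sigma> ` S = \<sigma> ` V" using permutes_image[OF pV] by simp
        then have "S = V" using injs by (simp add: inj_image_eq_iff)
        then show False using S(3) by simp
      qed
      ultimately show "sum W S \<noteq> 0" using gU unfolding genV_def by auto
    qed
    have evW: "\<And>x. x \<in> V \<Longrightarrow> ext_u n v x = W x"
    proof -
      fix x assume xV: "x \<in> V"
      show "ext_u n v x = W x"
      proof (cases "x = 0")
        case False then show ?thesis by (simp add: ext_u_def v_def W_def U_def)
      next
        case True
        have "V = insert 0 {1..n}" unfolding V_def by auto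
        then have "W 0 + sum W {1..n} = 0" using zW by simp
        moreover have "sum v {1..n} = sum W {1..n}" by (simp add: v_def W_def U_def)
        ultimately show ?thesis using True by (simp add: ext_u_def eq_neg_iff_add_eq_0 add.commute)
      qed
    qed
    have "mould_act n \<sigma> (fP n E h) u = fP n E h v" unfolding mould_act_def v_def by simp
    also have "\<dots> = Croot adj V 0 (ext_u n v)" unfolding adj_def V_def by (rule fP_Croot[OF assms(3)])
    also have "\<dots> = Croot adj V 0 W" by (rule Croot_cong) (rule evW)
    also have "\<dots> = \<epsilon> * Croot adj V k W"
    proof -
      have "Croot adj V k W = \<epsilon> * Croot adj V 0 W" unfolding \<epsilon>_def by (rule cform[OF zW gW])
      then have "\<epsilon> * Croot adj V k W = (\<epsilon> * \<epsilon>) * Croot adj V 0 W" by simp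
      then show ?thesis using ee by simp
    qed
    also have "Croot adj V k W = Croot adjs V 0 U"
      unfolding W_def adjs_def using Croot_relabel[OF pV, of adj k U] sk by simp
    also have "Croot adjs V 0 U = fP n (EG adjs) h' u"
      unfolding U_def V_def using fP_Croot[OF sh, of u] ae by simp
    finally show ?thesis .
  qed
  show ?thesis using eps sh main by blast
qed

end
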